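(* Let $\varphi:\mathbb B\to\mathbb B$ be slice regular with $\varphi(\mathbb B_I)\subseteq\mathbb B_I$ for some $I\in\mathbb S$. Then $C_\varphi f=f^{\odot}\varphi$ and $D_\varphi f=f_{\odot}\varphi$ are bounded operators on $H^2(\mathbb B)$ and $$\Big(\frac1{1-|\varphi(0)|^2}\Big)^{1/2}\le\|C_\varphi\|\le\Big(\frac{1+|\varphi(0)|}{1-|\varphi(0)|}\Big)^{1/2},\qquad\Big(\frac1{1-|\varphi(0)|^2}\Big)^{1/2}\le\|D_\varphi\|\le\Big(\frac{1+|\varphi(0)|}{1-|\varphi(0)|}\Big)^{1/2}.$$
   Context: $\mathbb H$ quaternions, $\mathbb S=\{q:q^2=-1\}$, $\mathbb C_I=\mathbb R+I\mathbb R$, $\mathbb B$ open unit ball, $\mathbb B_I=\mathbb B\cap\mathbb C_I$. Slice regular functions on $\mathbb B$ are convergent power series $\sum_nq^na_n$; $\ast$-product $\big(\sum q^na_n\big)\ast\big(\sum q^nb_n\big)=\sum_nq^n\sum_ka_kb_{n-k}$, $\varphi^{\ast0}=1$, $\varphi^{\ast n}=\varphi\ast\varphi^{\ast(n-1)}$. For $f=\sum q^na_n$: $f^{\odot}\varphi=\sum_n\varphi^{\ast n}a_n$, $f_{\odot}\varphi=\sum_na_n\ast\varphi^{\ast n}$. $H^2(\mathbb B)$: regular $f=\sum q^na_n$ with $\|f\|_2^2=\sum|a_n|^2<\infty$; $\|T\|=\sup_{\|f\|_2\le1}\|Tf\|_2$. *)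

theory Defs
  imports "HOL-Analysis.Analysis"
begin

text \<open>Quaternions are modelled as vectors in real^4 (components 1,2,3,4 = real, i, j, k
parts); the Euclidean norm is the quaternionic modulus. Quaternionic multiplication:\<close>

type_synonym quat = "real^4"

definition hmul :: "quat \<Rightarrow> quat \<Rightarrow> quat" where
  "hmul x y = (\<chi> i.
     if i = 1 then x$1*y$1 - x$2*y$2 - x$3*y$3 - x$4*y$4
     else if i = 2 then x$1*y$2 + x$2*y$1 + x$3*y$4 - x$4*y$3
     else if i = 3 then x$1*y$3 - x$2*y$4 + x$3*y$1 + x$4*y$2
     else x$1*y$4 + x$2*y$3 - x$3*y$2 + x$4*y$1)"

definition hone :: quat where
  "hone = (\<chi> i. if i = 1 then 1 else 0)"

primrec hpow :: "quat \<Rightarrow> nat \<Rightarrow> quat" where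
  "hpow q 0 = hone"
| "hpow q (Suc n) = hmul q (hpow q n)"

definition imag_units :: "quat set" where
  "imag_units = {q. hmul q q = - hone}"

definition slice :: "quat \<Rightarrow> quat set" where
  "slice I = {r *\<^sub>R hone + s *\<^sub>R I | r s. True}"

definition qball :: "quat set" where
  "qball = {q. norm q < 1}"

definition pseval :: "(nat \<Rightarrow> quat) \<Rightarrow> quat \<Rightarrow> quat" where
  "pseval a q = (\<Sum>n. hmul (hpow q n) (a n))"

definition slice_regular_ball :: "(nat \<Rightarrow> quat) \<Rightarrow> bool" where
  "slice_regular_ball a \<longleftrightarrow> (\<forall>q\<in>qball. summable (\<lambda>n. hmul (hpow q n) (a n)))"

definition represents :: "(quat \<Rightarrow> quat) \<Rightarrow> (nat \<Rightarrow> quat) \<Rightarrow> bool" where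
  "represents F c \<longleftrightarrow> (\<forall>q\<in>qball. ((\<lambda>n. hmul (hpow q n) (c n)) sums F q))"

definition sprod :: "(nat \<Rightarrow> quat) \<Rightarrow> (nat \<Rightarrow> quat) \<Rightarrow> nat \<Rightarrow> quat" where
  "sprod a b n = (\<Sum>k\<le>n. hmul (a k) (b (n - k)))"

primrec spow :: "(nat \<Rightarrow> quat) \<Rightarrow> nat \<Rightarrow> nat \<Rightarrow> quat" where
  "spow b 0 = (\<lambda>k. if k = 0 then hone else 0)"
| "spow b (Suc n) = sprod b (spow b n)"

definition H2 :: "(nat \<Rightarrow> quat) \<Rightarrow> bool" where
  "H2 a \<longleftrightarrow> summable (\<lambda>n. (norm (a n))^2)"

definition h2norm :: "(nat \<Rightarrow> quat) \<Rightarrow> real" where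
  "h2norm a = sqrt (\<Sum>n. (norm (a n))^2)"

text \<open>Operators given as pointwise series of regular functions:
  term a n q is the n-th summand at q for the function with coefficients a.\<close>

definition series_fun :: "((nat \<Rightarrow> quat) \<Rightarrow> nat \<Rightarrow> quat \<Rightarrow> quat) \<Rightarrow> (nat \<Rightarrow> quat) \<Rightarrow> quat \<Rightarrow> quat" where
  "series_fun T a q = (\<Sum>n. T a n q)"

text \<open>f^odot phi = sum_n phi^{*n} a_n and f_odot phi = sum_n a_n * phi^{*n}.\<close>

definition Cterm :: "(nat \<Rightarrow> quat) \<Rightarrow> (nat \<Rightarrow> quat) \<Rightarrow> nat \<Rightarrow> quat \<Rightarrow> quat" where
  "Cterm b a n q = hmul (pseval (spow b n) q) (a n)"

definition Dterm :: "(nat \<Rightarrow> quat) \<Rightarrow> (nat \<Rightarrow> quat) \<Rightarrow> nat \<Rightarrow> quat \<Rightarrow> quat" where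
  "Dterm b a n q = pseval (\<lambda>k. hmul (a n) (spow b n k)) q"

definition op_image_norms :: "((nat \<Rightarrow> quat) \<Rightarrow> nat \<Rightarrow> quat \<Rightarrow> quat) \<Rightarrow> real set" where
  "op_image_norms T = {h2norm c | a c. H2 a \<and> h2norm a \<le> 1 \<and> represents (series_fun T a) c}"

definition bounded_H2_op :: "((nat \<Rightarrow> quat) \<Rightarrow> nat \<Rightarrow> quat \<Rightarrow> quat) \<Rightarrow> bool" where
  "bounded_H2_op T \<longleftrightarrow>
     (\<forall>a. H2 a \<longrightarrow> (\<forall>q\<in>qball. summable (\<lambda>n. T a n q)) \<and>
                    (\<exists>c. H2 c \<and> represents (series_fun T a) c))
     \<and> bdd_above (op_image_norms T)"

definition opnorm :: "((nat \<Rightarrow> quat) \<Rightarrow> nat \<Rightarrow> quat \<Rightarrow> quat) \<Rightarrow> real" where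
  "opnorm T = Sup (op_image_norms T)"

end

theory Submission
  imports Defs "HOL-Complex_Analysis.Complex_Analysis"
begin

no_notation fps_nth (infixl \<open>$\<close> 75)




lemma hmul_nth:
  "hmul x y $ 1 = x$1*y$1 - x$2*y$2 - x$3*y$3 - x$4*y$4"
  "hmul x y $ 2 = x$1*y$2 + x$2*y$1 + x$3*y$4 - x$4*y$3"
  "hmul x y $ 3 = x$1*y$3 - x$2*y$4 + x$3*y$1 + x$4*y$2"
  "hmul x y $ 4 = x$1*y$4 + x$2*y$3 - x$3*y$2 + x$4*y$1"
  by (simp_all add: hmul_def)

lemma hone_nth: "hone$1 = 1" "hone$2 = 0" "hone$3 = 0" "hone$4 = 0"
  by (simp_all add: hone_def)

lemma quat_eq_iff: "(x::quat) = y \<longleftrightarrow> x$1 = y$1 \<and> x$2 = y$2 \<and> x$3 = y$3 \<and> x$4 = y$4"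
  by (simp add: vec_eq_iff forall_4)

lemma quat_norm_sq: "(norm (x::quat))^2 = (x$1)^2 + (x$2)^2 + (x$3)^2 + (x$4)^2"
  by (simp add: norm_vec_def L2_set_def sum_4 real_norm_def)

lemma quat_inner: "inner (x::quat) y = x$1*y$1 + x$2*y$2 + x$3*y$3 + x$4*y$4"
  by (simp add: inner_vec_def sum_4)

lemma hmul_assoc: "hmul (hmul x y) z = hmul x (hmul y z)"
  by (simp add: quat_eq_iff hmul_nth algebra_simps)

lemma hmul_hone_left[simp]: "hmul hone x = x" and hmul_hone_right[simp]: "hmul x hone = x"
  by (simp_all add: quat_eq_iff hmul_nth hone_nth)

lemma hmul_add_left: "hmul (x + y) z = hmul x z + hmul y z"
  and hmul_add_right: "hmul z (x + y) = hmul z x + hmul z y"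
  and hmul_scaleR_left: "hmul (r *\<^sub>R x) z = r *\<^sub>R hmul x z"
  and hmul_scaleR_right: "hmul z (r *\<^sub>R x) = r *\<^sub>R hmul z x"
  by (simp_all add: quat_eq_iff hmul_nth algebra_simps)

lemma norm_hmul: "norm (hmul x y) = norm x * norm y"
proof -
  have "(norm (hmul x y))^2 = (norm x * norm y)^2"
    unfolding power_mult_distrib quat_norm_sq hmul_nth by algebra
  then show ?thesis by (simp add: power2_eq_iff_nonneg)
qed

lemma hmul_diff_left: "hmul (x - y) z = hmul x z - hmul y z"
  and hmul_diff_right: "hmul z (x - y) = hmul z x - hmul z y"
  and hmul_minus_left: "hmul (- x) z = - hmul x z"
  and hmul_minus_right: "hmul z (- x) = - hmul z x"
  by (simp_all add: quat_eq_iff hmul_nth algebra_simps)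

lemma bounded_bilinear_hmul: "bounded_bilinear hmul"
  apply (rule bounded_bilinear.intro)
  apply (simp_all add: hmul_add_left hmul_add_right hmul_scaleR_left hmul_scaleR_right)
  by (rule exI[of _ 1]) (simp add: norm_hmul)

lemma imag_unitsD:
  assumes "I \<in> imag_units"
  shows "I$1 = 0" "(I$2)^2 + (I$3)^2 + (I$4)^2 = 1"
proof -
  have e: "hmul I I = - hone" using assms by (simp add: imag_units_def)
  from e have e1: "(I$1)^2 - (I$2)^2 - (I$3)^2 - (I$4)^2 = -1"
    and e2: "2*I$1*I$2 = 0" and e3: "2*I$1*I$3 = 0" and e4: "2*I$1*I$4 = 0"
    by (auto simp: quat_eq_iff hmul_nth hone_nth power2_eq_square algebra_simps)
  show "I$1 = 0"
  proof (rule ccontr)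
    assume "I$1 \<noteq> 0"
    with e2 e3 e4 have "I$2 = 0" "I$3 = 0" "I$4 = 0" by auto
    with e1 have "(I$1)^2 = -1" by simp
    moreover have "(I$1)^2 \<ge> 0" by simp
    ultimately show False by simp
  qed
  with e1 show "(I$2)^2 + (I$3)^2 + (I$4)^2 = 1" by simp
qed

lemma pure_unit_imag_units:
  assumes "u$1 = 0" "(u$2)^2 + (u$3)^2 + (u$4)^2 = 1"
  shows "u \<in> imag_units"
  using assms unfolding imag_units_def
  by (simp add: quat_eq_iff hmul_nth hone_nth power2_eq_square algebra_simps)

definition iota :: "quat \<Rightarrow> complex \<Rightarrow> quat" where
  "iota I z = Re z *\<^sub>R hone + Im z *\<^sub>R I"

lemma iota_nth: "I$1 = 0 \<Longrightarrow> iota I z $ 1 = Re z"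
   "iota I z $ 2 = Im z * I$2" "iota I z $ 3 = Im z * I$3" "iota I z $ 4 = Im z * I$4"
  by (simp_all add: iota_def hone_nth)

lemma iota_add: "iota I (z + w) = iota I z + iota I w"
  and iota_diff: "iota I (z - w) = iota I z - iota I w"
  and iota_minus: "iota I (- z) = - iota I z"
  and iota_zero[simp]: "iota I 0 = 0"
  and iota_scaleR: "iota I (r *\<^sub>R z) = r *\<^sub>R iota I z"
  and iota_of_real: "iota I (of_real r) = r *\<^sub>R hone"
  by (simp_all add: iota_def algebra_simps)

lemma bounded_linear_iota: "bounded_linear (iota I)"
proof -
  have "linear (iota I)" by (rule linearI) (simp_all add: iota_add iota_scaleR)
  then show ?thesis by (simp add: linear_conv_bounded_linear)
qed

lemma iota_mult:
  assumes "I \<in> imag_units"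
  shows "hmul (iota I z) (iota I w) = iota I (z * w)"
proof -
  have e: "hmul I I = - hone" using assms by (simp add: imag_units_def)
  show ?thesis
    unfolding iota_def
    by (simp add: hmul_add_left hmul_add_right hmul_scaleR_left hmul_scaleR_right e algebra_simps)
qed

lemma iota_one: "iota I 1 = hone" by (simp add: iota_def)

lemma norm_iota:
  assumes "I \<in> imag_units"
  shows "norm (iota I z) = norm z"
proof -
  note d = imag_unitsD[OF assms]
  have "(norm (iota I z))^2 = (Re z)^2 + (Im z)^2 * ((I$2)^2 + (I$3)^2 + (I$4)^2)"
    unfolding quat_norm_sq iota_nth(1)[OF d(1)] iota_nth(2-4)
    by (simp add: power_mult_distrib algebra_simps)
  also have "\<dots> = (norm z)^2" using d(2) by (simp add: cmod_power2)
  finally have "(norm (iota I z))^2 = (norm z)^2" .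
  then show ?thesis by (simp add: power2_eq_iff_nonneg)
qed

lemma hpow_iota:
  assumes "I \<in> imag_units"
  shows "hpow (iota I z) n = iota I (z ^ n)"
  by (induction n) (simp_all add: iota_one iota_mult[OF assms])

lemma hpow_real: "hpow (x *\<^sub>R hone) n = (x ^ n) *\<^sub>R hone"
  by (induction n) (simp_all add: hmul_scaleR_left)

lemma hpow_zero: "hpow 0 n = (if n = 0 then hone else 0)"
  by (cases n) (simp_all add: quat_eq_iff hmul_nth)

lemma hmul_zero_left[simp]: "hmul 0 x = 0" and hmul_zero_right[simp]: "hmul x 0 = 0"
  by (simp_all add: quat_eq_iff hmul_nth)

definition Jof :: "quat \<Rightarrow> quat" where
  "Jof I = (if I$2 = 0 \<and> I$3 = 0 then (\<chi> i. if i = 2 then 1 else 0)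
     else (1 / sqrt ((I$2)^2 + (I$3)^2)) *\<^sub>R (\<chi> i. if i = 2 then - I$3 else if i = 3 then I$2 else 0))"

lemma Jof_props:
  assumes "I \<in> imag_units"
  shows "(Jof I)$1 = 0" "((Jof I)$2)^2 + ((Jof I)$3)^2 + ((Jof I)$4)^2 = 1"
    "I$2 * (Jof I)$2 + I$3 * (Jof I)$3 + I$4 * (Jof I)$4 = 0"
proof -
  note d = imag_unitsD[OF assms]
  show "(Jof I)$1 = 0" by (simp add: Jof_def)
  show "((Jof I)$2)^2 + ((Jof I)$3)^2 + ((Jof I)$4)^2 = 1"
  proof (cases "I$2 = 0 \<and> I$3 = 0")
    case False
    then have p: "(I$2)^2 + (I$3)^2 > 0" by (simp add: add_pos_nonneg sum_power2_gt_zero_iff)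
    define s where "s = sqrt ((I$2)^2 + (I$3)^2)"
    have s2: "s^2 = (I$2)^2 + (I$3)^2" using p by (simp add: s_def)
    have sp: "s > 0" using p by (simp add: s_def)
    have "((Jof I)$2)^2 + ((Jof I)$3)^2 + ((Jof I)$4)^2 = ((I$3)^2 + (I$2)^2) / s^2"
      using False unfolding Jof_def s_def[symmetric] by (simp add: power_divide add_divide_distrib)
    also have "\<dots> = 1" using s2 sp False by (simp add: add.commute)
    finally show ?thesis .
  qed (simp add: Jof_def)
  show "I$2 * (Jof I)$2 + I$3 * (Jof I)$3 + I$4 * (Jof I)$4 = 0"
    by (simp add: Jof_def algebra_simps)
qed

lemma Jof_imag: "I \<in> imag_units \<Longrightarrow> Jof I \<in> imag_units"
  using Jof_props pure_unit_imag_units by blast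

lemma IJ_anticomm:
  assumes "I \<in> imag_units"
  shows "hmul I (Jof I) = - hmul (Jof I) I"
proof -
  note d = imag_unitsD[OF assms] and j = Jof_props[OF assms]
  show ?thesis unfolding quat_eq_iff vector_uminus_component hmul_nth using d(1) j(1) j(3)
    by (simp add: algebra_simps)
qed

lemma J_iota:
  assumes "I \<in> imag_units"
  shows "hmul (Jof I) (iota I z) = hmul (iota I (cnj z)) (Jof I)"
  unfolding iota_def using IJ_anticomm[OF assms]
  by (simp add: hmul_add_left hmul_add_right hmul_scaleR_left hmul_scaleR_right hmul_diff_left
     hmul_minus_left hmul_minus_right)

definition dec1 :: "quat \<Rightarrow> quat \<Rightarrow> complex" where
  "dec1 I q = Complex (inner q hone) (inner q I)"
definition dec2 :: "quat \<Rightarrow> quat \<Rightarrow> complex" where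
  "dec2 I q = Complex (inner q (Jof I)) (inner q (hmul I (Jof I)))"

definition Lq :: "quat \<Rightarrow> complex \<Rightarrow> complex \<Rightarrow> quat" where
  "Lq I z w = iota I z + hmul (iota I w) (Jof I)"

lemma norm_Lq:
  assumes "I \<in> imag_units"
  shows "(norm (Lq I z w))^2 = (norm z)^2 + (norm w)^2"
proof -
  note d = imag_unitsD[OF assms] and j = Jof_props[OF assms]
  define a where "a = I$2" define b where "b = I$3" define c where "c = I$4"
  define e where "e = Jof I$2" define f where "f = Jof I$3" define g where "g = Jof I$4"
  have c1: "a^2+b^2+c^2 = 1" "e^2+f^2+g^2=1" "a*e+b*f+c*g = 0"
    using d j by (simp_all add: a_def b_def c_def e_def f_def g_def)
  show ?thesis
    unfolding Lq_def quat_norm_sq cmod_power2 hmul_nth vector_add_component iota_nth(1)[OF d(1)] iota_nth(2-4)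
      a_def[symmetric] b_def[symmetric] c_def[symmetric] e_def[symmetric] f_def[symmetric] g_def[symmetric] j(1)
      using c1 by algebra
qed

lemma Lq_dec:
  assumes "I \<in> imag_units"
  shows "Lq I (dec1 I q) (dec2 I q) = q"
proof -
  note d = imag_unitsD[OF assms] and j = Jof_props[OF assms]
  define a where "a = I$2" define b where "b = I$3" define c where "c = I$4"
  define e where "e = Jof I$2" define f where "f = Jof I$3" define g where "g = Jof I$4"
  have c1: "a^2+b^2+c^2 = 1" "e^2+f^2+g^2=1" "a*e+b*f+c*g = 0"
    using d j by (simp_all add: a_def b_def c_def e_def f_def g_def)
  show ?thesis
    unfolding Lq_def quat_eq_iff hmul_nth vector_add_component iota_nth(1)[OF d(1)] iota_nth(2-4)
      dec1_def dec2_def quat_inner complex.sel hone_nth d(1) j(1)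
      a_def[symmetric] b_def[symmetric] c_def[symmetric] e_def[symmetric] f_def[symmetric] g_def[symmetric]
      using c1 by algebra
qed

lemma quat_polar:
  assumes I: "I \<in> imag_units"
  obtains K w where "K \<in> imag_units" "q = iota K w"
proof (cases "q$2 = 0 \<and> q$3 = 0 \<and> q$4 = 0")
  case True
  have "q = iota I (of_real (q$1))"
    using True by (simp add: iota_of_real quat_eq_iff hone_nth)
  then show ?thesis using that I by blast
next
  case False
  define n where "n = sqrt ((q$2)^2 + (q$3)^2 + (q$4)^2)"
  have p: "(q$2)^2 + (q$3)^2 + (q$4)^2 > 0" using False
    by (smt (verit) power2_less_eq_zero_iff zero_le_power2)
  then have np: "n > 0" and n2: "n^2 = (q$2)^2 + (q$3)^2 + (q$4)^2" by (simp_all add: n_def)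
  define K where "K = (1/n) *\<^sub>R (\<chi> i. if i = 1 then 0 else q$i)"
  have K: "K$1 = 0" "K$2 = q$2/n" "K$3 = q$3/n" "K$4 = q$4/n" by (simp_all add: K_def)
  have "(K$2)^2 + (K$3)^2 + (K$4)^2 = ((q$2)^2 + (q$3)^2 + (q$4)^2) / n^2"
    unfolding K by (simp add: power_divide add_divide_distrib)
  also have "\<dots> = 1" using n2 np p by simp
  finally have Ki: "K \<in> imag_units" using pure_unit_imag_units K(1) by blast
  have "q = iota K (Complex (q$1) n)"
    unfolding quat_eq_iff iota_nth(1)[OF K(1)] iota_nth(2-4) K using np by simp
  then show ?thesis using that Ki by blast
qed

definition RepF :: "quat \<Rightarrow> quat \<Rightarrow> quat \<Rightarrow> quat \<Rightarrow> quat" where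
  "RepF I K S1 S2 = (1/2) *\<^sub>R (S1 + S2) - (1/2) *\<^sub>R hmul (hmul K I) (S1 - S2)"

lemma iota_rep:
  assumes "I \<in> imag_units"
  shows "iota K u = RepF I K (iota I u) (iota I (cnj u))"
proof -
  have e: "hmul I I = - hone" using assms by (simp add: imag_units_def)
  have "iota I u - iota I (cnj u) = (2 * Im u) *\<^sub>R I" by (simp add: iota_def vec_eq_iff)
  then have "hmul (hmul K I) (iota I u - iota I (cnj u)) = - (2 * Im u) *\<^sub>R K"
    by (simp add: hmul_scaleR_right hmul_assoc e hmul_minus_right)
  moreover have "iota I u + iota I (cnj u) = (2 * Re u) *\<^sub>R hone" by (simp add: iota_def vec_eq_iff)
  ultimately show ?thesis unfolding RepF_def by (simp add: iota_def)
qed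

lemma RepF_hmul_right: "hmul (RepF I K S1 S2) c = RepF I K (hmul S1 c) (hmul S2 c)"
  unfolding RepF_def by (simp add: hmul_diff_left hmul_add_left hmul_scaleR_left hmul_assoc hmul_diff_right)

lemma RepF_sums:
  assumes "f sums S1" "g sums S2"
  shows "(\<lambda>n. RepF I K (f n) (g n)) sums RepF I K S1 S2"
proof -
  have bl: "bounded_linear (hmul (hmul K I))"
    by (rule bounded_bilinear.bounded_linear_right[OF bounded_bilinear_hmul])
  show ?thesis unfolding RepF_def
    by (intro sums_diff sums_scaleR_right sums_add bounded_linear.sums[OF bl] assms)
qed

lemma hmul_hpow_rep:
  assumes "I \<in> imag_units" "K \<in> imag_units"
  shows "hmul (hpow (iota K w) k) c =
    RepF I K (hmul (hpow (iota I w) k) c) (hmul (hpow (iota I (cnj w)) k) c)"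
  using iota_rep[OF assms(1), of K "w^k"] RepF_hmul_right
  by (simp add: hpow_iota assms)

lemma powser_real_unique:
  fixes a :: "nat \<Rightarrow> real"
  assumes "\<And>x. \<bar>x\<bar> < 1 \<Longrightarrow> (\<lambda>n. a n * x ^ n) sums 0"
  shows "a m = 0"
proof (cases "m = 0")
  case True
  have "(\<lambda>n. a n * 0 ^ n) sums 0" by (rule assms) simp
  moreover have "(\<lambda>n. a n * 0 ^ n) sums a 0"
  proof -
    have "(\<lambda>n. a n * 0 ^ n) = (\<lambda>n. if n = 0 then a 0 else 0)" by (auto simp: fun_eq_iff)
    then show ?thesis using sums_single[of 0 "\<lambda>_. a 0"] by simp
  qed
  ultimately show ?thesis using True sums_unique2 by blast
next
  case False
  show ?thesis
  proof (rule ccontr)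
    assume "a m \<noteq> 0"
    obtain s where s: "0 < s" "\<And>z::real. z \<in> cball 0 s - {0} \<Longrightarrow> (\<lambda>x. 0::real) z \<noteq> 0"
      by (rule powser_0_nonzero[where r=1 and a=a and \<xi>=0 and f="\<lambda>x. 0" and m=m])
         (use assms False \<open>a m \<noteq> 0\<close> in \<open>auto simp: real_norm_def dist_real_def\<close>)
    from s(2)[of s] s(1) show False by simp
  qed
qed

lemma quat_coeff_unique:
  assumes "\<And>x. \<bar>x\<bar> < 1 \<Longrightarrow> (\<lambda>n. hmul (hpow (x *\<^sub>R hone) n) (c n)) sums F x"
    "\<And>x. \<bar>x\<bar> < 1 \<Longrightarrow> (\<lambda>n. hmul (hpow (x *\<^sub>R hone) n) (c' n)) sums F x"
  shows "c = c'"
proof -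
  have "(c m - c' m) $ i = 0" for m i
  proof -
    have "(\<lambda>n. (c n - c' n) $ i * x ^ n) sums 0" if "\<bar>x\<bar> < 1" for x
    proof -
      have "(\<lambda>n. x^n *\<^sub>R c n - x^n *\<^sub>R c' n) sums (F x - F x)"
        using sums_diff[OF assms(1) assms(2), OF that that] by (simp add: hpow_real hmul_scaleR_left)
      then have "(\<lambda>n. (x^n *\<^sub>R c n - x^n *\<^sub>R c' n) $ i) sums ((F x - F x) $ i)"
        by (rule bounded_linear.sums[OF bounded_linear_vec_nth])
      then show ?thesis by (simp add: algebra_simps)
    qed
    then show ?thesis by (rule powser_real_unique)
  qed
  then show ?thesis by (auto simp: vec_eq_iff fun_eq_iff)
qed




definition ic :: "real \<Rightarrow> real \<Rightarrow> complex" where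
  "ic r t = circlepath 0 r t"

lemma ic_eq: "ic r t = of_real r * exp (2 * of_real pi * \<i> * of_real t)"
  by (simp add: ic_def circlepath)

lemma norm_ic: "r \<ge> 0 \<Longrightarrow> norm (ic r t) = r"
  by (simp add: ic_eq norm_mult norm_exp_eq_Re)

lemma ic_nz: "r > 0 \<Longrightarrow> ic r t \<noteq> 0"
  using norm_ic[of r t] by auto

lemma cnj_ic: "r > 0 \<Longrightarrow> cnj (ic r t) = of_real (r^2) / ic r t"
proof -
  assume r: "r > 0"
  have "cnj (ic r t) * ic r t = of_real ((norm (ic r t))^2)"
    by (simp add: complex_norm_square mult.commute del: of_real_power)
  then show ?thesis using r ic_nz[OF r] norm_ic[of r t] by (simp add: field_simps)
qed

lemma continuous_on_ic[continuous_intros]: "continuous_on S (ic r)"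
  unfolding ic_eq by (intro continuous_intros)

lemma has_integral_Re:
  "(f has_integral I) S \<Longrightarrow> ((\<lambda>x. Re (f x)) has_integral Re I) S"
  using has_integral_linear[OF _ bounded_linear_Re] by (simp add: o_def)

lemma mean_hol:
  assumes hol: "f holomorphic_on ball 0 R" and r: "0 < r" "r < R"
  shows "((\<lambda>t. f (ic r t) / (ic r t)^k) has_integral ((deriv ^^ k) f 0 / fact k)) {0..1}"
proof -
  have sub: "cball 0 r \<subseteq> ball 0 R" "ball 0 r \<subseteq> ball 0 R" using r by auto
  have cont: "continuous_on (cball 0 r) f"
    using holomorphic_on_imp_continuous_on holomorphic_on_subset[OF hol sub(1)] by blast
  have hol': "f holomorphic_on ball 0 r" using holomorphic_on_subset[OF hol sub(2)] .
  have "((\<lambda>u. f u / (u - 0)^(Suc k)) has_contour_integral ((2*pi*\<i>)/fact k * (deriv^^k) f 0)) (circlepath 0 r)"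
    by (rule Cauchy_has_contour_integral_higher_derivative_circlepath[OF cont hol']) (use r in auto)
  then have h: "((\<lambda>x. f (ic r x) / (ic r x)^Suc k * vector_derivative (circlepath 0 r) (at x within {0..1}))
      has_integral ((2*pi*\<i>)/fact k * (deriv^^k) f 0)) {0..1}"
    by (simp add: has_contour_integral_def ic_def)
  have "((\<lambda>x. (2*pi*\<i>) * (f (ic r x) / (ic r x)^k)) has_integral ((2*pi*\<i>)/fact k * (deriv^^k) f 0)) {0..1}"
  proof (subst has_integral_cong[of _ _ "\<lambda>x. f (ic r x) / (ic r x)^Suc k * vector_derivative (circlepath 0 r) (at x within {0..1})"])
    fix x :: real assume x: "x \<in> {0..1}"
    have "vector_derivative (circlepath 0 r) (at x within {0..1}) = 2 * pi * \<i> * ic r x"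
      using x by (simp add: vector_derivative_circlepath01 ic_eq)
    then show "(2*pi*\<i>) * (f (ic r x) / (ic r x)^k) =
        f (ic r x) / (ic r x)^Suc k * vector_derivative (circlepath 0 r) (at x within {0..1})"
      using ic_nz[OF r(1), of x] by (simp add: field_simps)
  qed (rule h)
  from has_integral_mult_right[OF this, of "1/(2*pi*\<i>)"]
  show ?thesis by (simp add: field_simps)
qed

lemma mean_hol0:
  assumes hol: "f holomorphic_on ball 0 R" and r: "0 < r" "r < R"
  shows "((\<lambda>t. f (ic r t)) has_integral f 0) {0..1}"
  using mean_hol[OF assms, of 0] by simp

lemma powser_unique_gen:
  fixes a :: "nat \<Rightarrow> 'a::{real_normed_field,banach}"
  assumes R: "R > 0" and h: "\<And>x. norm x < R \<Longrightarrow> (\<lambda>n. a n * x ^ n) sums 0"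
  shows "a m = 0"
proof (cases "m = 0")
  case True
  have "(\<lambda>n. a n * 0 ^ n) sums 0" by (rule h) (use R in simp)
  moreover have "(\<lambda>n. a n * 0 ^ n) sums a 0"
  proof -
    have "(\<lambda>n. a n * 0 ^ n) = (\<lambda>n. if n = 0 then a 0 else 0)" by (auto simp: fun_eq_iff)
    then show ?thesis using sums_single[of 0 "\<lambda>_. a 0"] by simp
  qed
  ultimately show ?thesis using True sums_unique2 by blast
next
  case False
  show ?thesis
  proof (rule ccontr)
    assume am: "a m \<noteq> 0"
    obtain s where s: "0 < s" "\<And>z::'a. z \<in> cball 0 s - {0} \<Longrightarrow> (\<lambda>x. 0::'a) z \<noteq> 0"
      by (rule powser_0_nonzero[where r=R and a=a and \<xi>=0 and f="\<lambda>x. 0" and m=m])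
         (use h False am R in \<open>auto simp: dist_norm\<close>)
    obtain z :: 'a where "norm z = s" using vector_choose_size[of s] s(1) by auto
    from s(2)[of z] s(1) \<open>norm z = s\<close> show False by auto
  qed
qed

lemma taylor_unique:
  assumes hol: "f holomorphic_on ball 0 R" and R: "R > 0"
    and sm: "\<And>z. norm z < R \<Longrightarrow> (\<lambda>n. c n * z ^ n) sums f z"
  shows "(deriv ^^ k) f 0 / fact k = c k"
proof -
  have "((deriv ^^ k) f 0 / fact k - c k) = 0"
  proof (rule powser_unique_gen[OF R, where a = "\<lambda>k. (deriv ^^ k) f 0 / fact k - c k"])
    fix x :: complex assume x: "norm x < R"
    have "(\<lambda>n. (deriv ^^ n) f 0 / fact n * (x - 0)^n) sums f x"
      by (rule holomorphic_power_series[OF hol]) (use x in simp)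
    from sums_diff[OF this sm[OF x]]
    show "(\<lambda>n. ((deriv ^^ n) f 0 / fact n - c n) * x ^ n) sums 0" by (simp add: algebra_simps)
  qed
  then show ?thesis by simp
qed

lemma poly_taylor:
  fixes b :: "nat \<Rightarrow> complex"
  shows "(deriv ^^ k) (\<lambda>z. \<Sum>j\<le>M. b j * z^j) 0 / fact k = (if k \<le> M then b k else 0)"
proof (rule taylor_unique[where R=1])
  show "(\<lambda>z. \<Sum>j\<le>M. b j * z^j) holomorphic_on ball 0 1" by (intro holomorphic_intros)
  fix z :: complex
  have "(\<lambda>n. (if n \<le> M then b n else 0) * z ^ n) sums (\<Sum>n\<in>{..M}. (if n \<le> M then b n else 0) * z ^ n)"
    by (rule sums_finite) auto
  then show "(\<lambda>n. (if n \<le> M then b n else 0) * z ^ n) sums (\<Sum>j\<le>M. b j * z^j)" by simp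
qed simp

lemma mean_inner:
  assumes hol: "A holomorphic_on ball 0 R" and r: "0 < r" "r < R"
  shows "((\<lambda>t. A (ic r t) * cnj (\<Sum>k\<le>M. b k * (ic r t)^k)) has_integral
      (\<Sum>k\<le>M. cnj (b k) * of_real (r^(2*k)) * ((deriv ^^ k) A 0 / fact k))) {0..1}"
proof -
  have "((\<lambda>t. \<Sum>k\<le>M. cnj (b k) * of_real (r^(2*k)) * (A (ic r t) / (ic r t)^k)) has_integral
      (\<Sum>k\<le>M. cnj (b k) * of_real (r^(2*k)) * ((deriv ^^ k) A 0 / fact k))) {0..1}"
    by (intro has_integral_sum has_integral_mult_right mean_hol[OF hol r]) auto
  moreover have "A (ic r t) * cnj (\<Sum>k\<le>M. b k * (ic r t)^k) =
      (\<Sum>k\<le>M. cnj (b k) * of_real (r^(2*k)) * (A (ic r t) / (ic r t)^k))" for t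
  proof -
    have "cnj ((ic r t)^k) = of_real (r^(2*k)) / (ic r t)^k" for k
      using cnj_ic[OF r(1), of t] by (simp add: power_divide power_mult flip: of_real_power)
    then show ?thesis by (simp add: sum_distrib_left algebra_simps)
  qed
  ultimately show ?thesis by simp
qed

lemma Re_cnj_mult: "Re (cnj x * of_real c * x) = (cmod x)^2 * c" "Re (cnj x * x) = (cmod x)^2"
  unfolding cmod_power2 by (simp_all add: power2_eq_square algebra_simps)

lemma re_ineq: "2 * Re (x * cnj y) - Re (y * cnj y) \<le> (cmod x)^2"
proof -
  have "0 \<le> (Re x - Re y)^2 + (Im x - Im y)^2" by simp
  then show ?thesis unfolding cmod_power2 by (simp add: power2_eq_square algebra_simps)
qed

lemma poly_parseval:
  fixes b :: "nat \<Rightarrow> complex"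
  shows "((\<lambda>t. (norm (\<Sum>k\<le>M. b k * (ic 1 t)^k))^2) has_integral (\<Sum>k\<le>M. (norm (b k))^2)) {0..1}"
proof -
  let ?B = "\<lambda>z. \<Sum>j\<le>M. b j * z^j"
  have hol: "?B holomorphic_on ball 0 2" by (intro holomorphic_intros)
  have "((\<lambda>t. ?B (ic 1 t) * cnj (?B (ic 1 t))) has_integral
      (\<Sum>k\<le>M. cnj (b k) * of_real (1^(2*k)) * ((deriv ^^ k) ?B 0 / fact k))) {0..1}"
    by (rule mean_inner[OF hol]) auto
  then have i: "((\<lambda>t. ?B (ic 1 t) * cnj (?B (ic 1 t))) has_integral (\<Sum>k\<le>M. cnj (b k) * b k)) {0..1}"
    by (simp add: poly_taylor)
  have e: "\<And>x. Re (x * cnj x) = (cmod x)^2" by (metis Re_complex_of_real complex_norm_square)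
  from has_integral_Re[OF i] show ?thesis
    unfolding e Re_sum Re_cnj_mult .
qed

lemma bessel_circle:
  assumes hol: "A holomorphic_on ball 0 R" and r: "0 < r" "r < R"
  shows "(\<Sum>k\<le>M. (norm ((deriv ^^ k) A 0 / fact k))^2 * r^(2*k)) \<le> integral {0..1} (\<lambda>t. (norm (A (ic r t)))^2)"
proof -
  define a where "a k = (deriv ^^ k) A 0 / fact k" for k
  let ?B = "\<lambda>z. \<Sum>j\<le>M. a j * z^j"
  have holB: "?B holomorphic_on ball 0 (r+1)" by (intro holomorphic_intros)
  have i1: "((\<lambda>t. A (ic r t) * cnj (?B (ic r t))) has_integral
      (\<Sum>k\<le>M. cnj (a k) * of_real (r^(2*k)) * a k)) {0..1}"
    using mean_inner[OF hol r, where M=M and b=a] by (simp add: a_def)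
  have i2: "((\<lambda>t. ?B (ic r t) * cnj (?B (ic r t))) has_integral
      (\<Sum>k\<le>M. cnj (a k) * of_real (r^(2*k)) * a k)) {0..1}"
    using mean_inner[OF holB, where r=r and M=M and b=a] r by (simp add: poly_taylor)
  have S: "Re (\<Sum>k\<le>M. cnj (a k) * of_real (r^(2*k)) * a k) = (\<Sum>k\<le>M. (norm (a k))^2 * r^(2*k))"
    unfolding Re_sum Re_cnj_mult ..
  have i3: "((\<lambda>t. 2 * Re (A (ic r t) * cnj (?B (ic r t))) - Re (?B (ic r t) * cnj (?B (ic r t))))
      has_integral (\<Sum>k\<le>M. (norm (a k))^2 * r^(2*k))) {0..1}"
    using has_integral_diff[OF has_integral_mult_right[OF has_integral_Re[OF i1], of 2] has_integral_Re[OF i2]] S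
    by simp
  have contA: "continuous_on (cball 0 r) A"
    using holomorphic_on_imp_continuous_on holomorphic_on_subset[OF hol] r by (meson mem_ball mem_cball order.strict_trans1 subsetI)
  have "continuous_on {0..1} (\<lambda>t. A (ic r t))"
    by (rule continuous_on_compose2[OF contA continuous_on_ic]) (use r in \<open>auto simp: norm_ic\<close>)
  then have "continuous_on {0..1} (\<lambda>t. (norm (A (ic r t)))^2)" by (intro continuous_intros)
  then have i4: "((\<lambda>t. (norm (A (ic r t)))^2) has_integral integral {0..1} (\<lambda>t. (norm (A (ic r t)))^2)) {0..1}"
    using integrable_continuous_interval by (metis integrable_integral)
  show ?thesis unfolding a_def[symmetric]
  proof (rule has_integral_le[OF i3 i4])
    fix t
    let ?x = "A (ic r t)" and ?y = "?B (ic r t)"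
    show "2 * Re (?x * cnj ?y) - Re (?y * cnj ?y) \<le> (norm ?x)^2" by (rule re_ineq)
  qed
qed




definition pk :: "complex \<Rightarrow> complex \<Rightarrow> complex" where
  "pk z e = e / (e - z) + cnj z * e / (1 - cnj z * e)"

lemma pk_nz:
  assumes "norm z < 1" "norm e = 1"
  shows "e - z \<noteq> 0" "1 - cnj z * e \<noteq> 0"
proof -
  show "e - z \<noteq> 0" using assms by auto
  have "norm (cnj z * e) < 1" using assms by (simp add: norm_mult)
  then show "1 - cnj z * e \<noteq> 0" by auto
qed

lemma continuous_on_pk:
  assumes "continuous_on S Z" "continuous_on S E" "\<And>x. x \<in> S \<Longrightarrow> norm (Z x) < 1 \<and> norm (E x) = 1"
  shows "continuous_on S (\<lambda>x. pk (Z x) (E x))"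
  unfolding pk_def using assms pk_nz by (intro continuous_intros) auto

lemma pk_real:
  assumes z: "norm z < 1" and e: "norm e = 1"
  shows "pk z e = of_real ((1 - (norm z)^2) / (norm (e - z))^2)"
proof -
  note nz = pk_nz[OF z e]
  have ee: "cnj e * e = 1" using e by (metis complex_norm_square mult.commute of_real_1 power_one)
  have eq: "1 - cnj z * e = e * cnj (e - z)" using ee by (simp add: algebra_simps)
  have e0: "e \<noteq> 0" using e by auto
  have c0: "cnj (e - z) \<noteq> 0" using nz by simp
  have "cnj z * e / (1 - cnj z * e) = (cnj z * e) / (e * cnj (e - z))" by (simp only: eq)
  also have "\<dots> = cnj z / cnj (e - z)" using e0 c0 by (simp add: field_simps)
  finally have "pk z e = e / (e - z) + cnj z / cnj (e - z)" by (simp add: pk_def)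
  also have "\<dots> = (e * cnj (e - z) + cnj z * (e - z)) / ((e - z) * cnj (e - z))"
    using nz by (simp add: field_simps)
  also have "e * cnj (e - z) + cnj z * (e - z) = 1 - z * cnj z"
    using ee by (simp add: algebra_simps)
  also have "(e - z) * cnj (e - z) = of_real ((norm (e - z))^2)" by (metis complex_norm_square)
  also have "1 - z * cnj z = of_real (1 - (norm z)^2)" by (simp add: complex_norm_square[symmetric] del: of_real_power)
  finally show ?thesis by simp
qed

lemma pk_bound:
  assumes z: "norm z < 1" and e: "norm e = 1"
  shows "Re (pk z e) \<le> (1 + norm z) / (1 - norm z)" "Re (pk z e) \<ge> 0" "Im (pk z e) = 0"
proof -
  have d: "norm (e - z) \<ge> 1 - norm z" using e norm_triangle_ineq2[of e z] by simp
  have p: "1 - norm z > 0" using z by simp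
  have "(1 - (norm z)^2) / (norm (e - z))^2 \<le> (1 - (norm z)^2) / (1 - norm z)^2"
    apply (rule divide_left_mono)
    using d p z by (auto intro!: power_mono mult_pos_pos power_le_one simp: abs_square_less_1)
  also have "\<dots> = ((1 + norm z) * (1 - norm z)) / ((1 - norm z) * (1 - norm z))"
    by (simp add: power2_eq_square algebra_simps)
  also have "\<dots> = (1 + norm z) / (1 - norm z)" using p by simp
  finally show "Re (pk z e) \<le> (1 + norm z) / (1 - norm z)" using pk_real[OF z e] by simp
  have "(norm z)^2 \<le> 1" using z by (simp add: power_le_one)
  then show "Re (pk z e) \<ge> 0" using pk_real[OF z e] by (simp del: of_real_power)
  show "Im (pk z e) = 0" using pk_real[OF z e] by simp
qed

lemma mean_hol_w:
  assumes hol: "f holomorphic_on ball 0 R" and r: "0 < r" "r < R" and w: "norm w < r"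
  shows "((\<lambda>t. f (ic r t) * ic r t / (ic r t - w)) has_integral f w) {0..1}"
proof -
  have sub: "cball 0 r \<subseteq> ball 0 R" "ball 0 r \<subseteq> ball 0 R" using r by auto
  have cont: "continuous_on (cball 0 r) f"
    using holomorphic_on_imp_continuous_on holomorphic_on_subset[OF hol sub(1)] by blast
  have hol': "f holomorphic_on ball 0 r" using holomorphic_on_subset[OF hol sub(2)] .
  have "((\<lambda>u. f u / (u - w)^(Suc 0)) has_contour_integral ((2*pi*\<i>)/fact 0 * (deriv^^0) f w)) (circlepath 0 r)"
    by (rule Cauchy_has_contour_integral_higher_derivative_circlepath[OF cont hol']) (use w in auto)
  then have h: "((\<lambda>x. f (ic r x) / (ic r x - w) * vector_derivative (circlepath 0 r) (at x within {0..1}))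
      has_integral ((2*pi*\<i>) * f w)) {0..1}"
    by (simp add: has_contour_integral_def ic_def)
  have "((\<lambda>x. (2*pi*\<i>) * (f (ic r x) * ic r x / (ic r x - w))) has_integral ((2*pi*\<i>) * f w)) {0..1}"
  proof (subst has_integral_cong[of _ _ "\<lambda>x. f (ic r x) / (ic r x - w) * vector_derivative (circlepath 0 r) (at x within {0..1})"])
    fix x :: real assume x: "x \<in> {0..1}"
    have "vector_derivative (circlepath 0 r) (at x within {0..1}) = 2 * pi * \<i> * ic r x"
      using x by (simp add: vector_derivative_circlepath01 ic_eq)
    then show "(2*pi*\<i>) * (f (ic r x) * ic r x / (ic r x - w)) =
        f (ic r x) / (ic r x - w) * vector_derivative (circlepath 0 r) (at x within {0..1})"
      by simp
  qed (rule h)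
  from has_integral_mult_right[OF this, of "1/(2*pi*\<i>)"]
  show ?thesis by (simp add: field_simps)
qed

lemma poisson_repr:
  assumes hol: "F holomorphic_on ball 0 R" and R: "R > 1" and z: "norm z < 1"
  shows "((\<lambda>s. F (ic 1 s) * pk z (ic 1 s)) has_integral F z) {0..1}"
proof -
  define R2 where "R2 = (if z = 0 then R else min R (1 / norm z))"
  have R2: "R2 > 1" using R z by (auto simp: R2_def field_simps)
  have nz: "1 - cnj z * u \<noteq> 0" if "u \<in> ball 0 R2" for u
  proof (cases "z = 0")
    case False
    then have "norm u < 1 / norm z" using that by (simp add: R2_def)
    then have "norm (cnj z * u) < 1" using False by (simp add: norm_mult field_simps)
    then show ?thesis by auto
  qed simp
  have sub: "ball 0 R2 \<subseteq> ball 0 R" by (auto simp: R2_def)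
  have hol2: "(\<lambda>u. F u * (cnj z * u / (1 - cnj z * u))) holomorphic_on ball 0 R2"
    using nz holomorphic_on_subset[OF hol sub]
    by (intro holomorphic_intros) (auto simp: R2_def)
  have i2: "((\<lambda>s. F (ic 1 s) * (cnj z * ic 1 s / (1 - cnj z * ic 1 s))) has_integral 0) {0..1}"
    using mean_hol0[OF hol2, of 1] R2 by simp
  have i1: "((\<lambda>s. F (ic 1 s) * ic 1 s / (ic 1 s - z)) has_integral F z) {0..1}"
    by (rule mean_hol_w[OF hol]) (use R z in auto)
  have "((\<lambda>s. F (ic 1 s) * ic 1 s / (ic 1 s - z) + F (ic 1 s) * (cnj z * ic 1 s / (1 - cnj z * ic 1 s)))
      has_integral F z) {0..1}"
    using has_integral_add[OF i1 i2] by simp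
  then show ?thesis by (simp add: pk_def algebra_simps)
qed

lemma poisson_one:
  assumes z: "norm z < 1"
  shows "((\<lambda>s. pk z (ic 1 s)) has_integral 1) {0..1}"
  using poisson_repr[of "\<lambda>_. 1" 2 z] z by simp




lemma norm_diff_sq: "(cmod (x - c))^2 = (cmod x)^2 - 2 * Re (cnj c * x) + (cmod c)^2"
  unfolding cmod_power2 by (simp add: power2_eq_square algebra_simps)

lemma Re_of_real_mult3: "Re (a * (b * of_real p)) = p * Re (a * b)"
  by (simp add: algebra_simps)

lemma cont_comp_ic:
  assumes "continuous_on (ball 0 R) F" "0 \<le> r" "r < R"
  shows "continuous_on S (\<lambda>t. F (ic r t))"
  by (rule continuous_on_compose2[OF assms(1) continuous_on_ic]) (use assms in \<open>auto simp: norm_ic\<close>)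

lemma majorant:
  assumes hol: "F holomorphic_on ball 0 R" and R: "R > 1" and z: "norm z < 1"
  shows "(norm (F z))^2 \<le> integral {0..1} (\<lambda>s. (norm (F (ic 1 s)))^2 * Re (pk z (ic 1 s)))"
proof -
  define c where "c = F z"
  have cF: "continuous_on (ball 0 R) F" using hol holomorphic_on_imp_continuous_on by blast
  have cFe: "continuous_on {0..1} (\<lambda>s. F (ic 1 s))" by (rule cont_comp_ic[OF cF]) (use R in auto)
  have cpk: "continuous_on {0..1} (\<lambda>s. pk z (ic 1 s))"
    by (rule continuous_on_pk[OF continuous_on_const continuous_on_ic]) (simp add: z norm_ic)
  have "continuous_on {0..1} (\<lambda>s. (norm (F (ic 1 s)))^2 * Re (pk z (ic 1 s)))"
    using cFe cpk by (intro continuous_intros)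
  then have iF: "((\<lambda>s. (norm (F (ic 1 s)))^2 * Re (pk z (ic 1 s))) has_integral
      integral {0..1} (\<lambda>s. (norm (F (ic 1 s)))^2 * Re (pk z (ic 1 s)))) {0..1}"
    by (rule integrable_integral[OF integrable_continuous_interval])
  have i1: "((\<lambda>s. Re (cnj c * (F (ic 1 s) * pk z (ic 1 s)))) has_integral (norm c)^2) {0..1}"
    using has_integral_Re[OF has_integral_mult_right[OF poisson_repr[OF hol R z], of "cnj c"]]
    unfolding c_def[symmetric] Re_cnj_mult(2) .
  have i0: "((\<lambda>s. Re (pk z (ic 1 s)) * (norm c)^2) has_integral (norm c)^2) {0..1}"
    using has_integral_mult_left[OF has_integral_Re[OF poisson_one[OF z]], of "(norm c)^2"] by simp
  have "((\<lambda>s. (norm (F (ic 1 s)))^2 * Re (pk z (ic 1 s)) - 2 * Re (cnj c * (F (ic 1 s) * pk z (ic 1 s)))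
      + Re (pk z (ic 1 s)) * (norm c)^2) has_integral
      integral {0..1} (\<lambda>s. (norm (F (ic 1 s)))^2 * Re (pk z (ic 1 s))) - 2 * (norm c)^2 + (norm c)^2) {0..1}"
    using has_integral_add[OF has_integral_diff[OF iF has_integral_mult_right[OF i1, of 2]] i0] by simp
  then have "0 \<le> integral {0..1} (\<lambda>s. (norm (F (ic 1 s)))^2 * Re (pk z (ic 1 s))) - 2 * (norm c)^2 + (norm c)^2"
  proof (rule has_integral_nonneg)
    fix s :: real assume s: "s \<in> {0..1}"
    let ?e = "ic 1 s"
    have e1: "norm ?e = 1" by (simp add: norm_ic)
    have pr: "pk z ?e = of_real (Re (pk z ?e))" using pk_bound(3)[OF z e1] by (simp add: complex_eq_iff)
    have eq: "Re (cnj c * (F ?e * pk z ?e)) = Re (pk z ?e) * Re (cnj c * F ?e)"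
      by (subst pr) (rule Re_of_real_mult3)
    have "(norm (F ?e))^2 * Re (pk z ?e) - 2 * Re (cnj c * (F ?e * pk z ?e)) + Re (pk z ?e) * (norm c)^2
       = Re (pk z ?e) * (norm (F ?e - c))^2"
      unfolding norm_diff_sq eq by (simp add: algebra_simps)
    also have "\<dots> \<ge> 0" using pk_bound(2)[OF z e1] by simp
    finally show "0 \<le> (norm (F ?e))^2 * Re (pk z ?e) - 2 * Re (cnj c * (F ?e * pk z ?e)) + Re (pk z ?e) * (norm c)^2" .
  qed
  then show ?thesis by (simp add: c_def)
qed


lemma pk_mean:
  assumes hol: "\<phi> holomorphic_on ball 0 1" and phi: "\<And>z. norm z < 1 \<Longrightarrow> norm (\<phi> z) < 1"
    and r: "0 < r" "r < 1" and e: "norm e = 1"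
  shows "((\<lambda>t. pk (\<phi> (ic r t)) e) has_integral pk (\<phi> 0) e) {0..1}"
proof -
  have n1: "e - \<phi> u \<noteq> 0" if "u \<in> ball 0 1" for u using pk_nz(1)[OF phi e] that by simp
  have n2: "1 - \<phi> u * cnj e \<noteq> 0" if "u \<in> ball 0 1" for u
  proof -
    have "norm (\<phi> u * cnj e) < 1" using phi[of u] that e by (simp add: norm_mult)
    then show ?thesis by auto
  qed
  have h1: "(\<lambda>u. e / (e - \<phi> u)) holomorphic_on ball 0 1"
    using n1 hol by (intro holomorphic_intros) auto
  have h2: "(\<lambda>u. \<phi> u * cnj e / (1 - \<phi> u * cnj e)) holomorphic_on ball 0 1"
    using n2 hol by (intro holomorphic_intros) auto
  have i1: "((\<lambda>t. e / (e - \<phi> (ic r t))) has_integral e / (e - \<phi> 0)) {0..1}"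
    using mean_hol0[OF h1 r] by simp
  have i2: "((\<lambda>t. \<phi> (ic r t) * cnj e / (1 - \<phi> (ic r t) * cnj e)) has_integral \<phi> 0 * cnj e / (1 - \<phi> 0 * cnj e)) {0..1}"
    using mean_hol0[OF h2 r] by simp
  have i2': "((\<lambda>t. cnj (\<phi> (ic r t)) * e / (1 - cnj (\<phi> (ic r t)) * e)) has_integral cnj (\<phi> 0) * e / (1 - cnj (\<phi> 0) * e)) {0..1}"
    using iffD2[OF has_integral_cnj i2] by (simp add: o_def)
  show ?thesis unfolding pk_def by (rule has_integral_add[OF i1 i2'])
qed

lemma mean_U:
  assumes hol: "F holomorphic_on ball 0 R" and R: "R > 1"
    and holp: "\<phi> holomorphic_on ball 0 1" and phi: "\<And>z. norm z < 1 \<Longrightarrow> norm (\<phi> z) < 1"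
    and r: "0 < r" "r < 1"
  shows "((\<lambda>t. integral {0..1} (\<lambda>s. (norm (F (ic 1 s)))^2 * Re (pk (\<phi> (ic r t)) (ic 1 s)))) has_integral
     integral {0..1} (\<lambda>s. (norm (F (ic 1 s)))^2 * Re (pk (\<phi> 0) (ic 1 s)))) {0..1}"
proof -
  define G where "G t s = (norm (F (ic 1 s)))^2 * Re (pk (\<phi> (ic r t)) (ic 1 s))" for t s
  have cF: "continuous_on (ball 0 R) F" using hol holomorphic_on_imp_continuous_on by blast
  have cp: "continuous_on (ball 0 1) \<phi>" using holp holomorphic_on_imp_continuous_on by blast
  have cf: "continuous_on UNIV (\<lambda>x::real\<times>real. ic r (fst x))"
    by (rule continuous_on_compose2[OF continuous_on_ic continuous_on_fst]) auto
  have cs: "continuous_on UNIV (\<lambda>x::real\<times>real. ic 1 (snd x))"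
    by (rule continuous_on_compose2[OF continuous_on_ic continuous_on_snd]) auto
  have c1: "continuous_on UNIV (\<lambda>x::real\<times>real. \<phi> (ic r (fst x)))"
    using r by (intro continuous_on_compose2[OF cp cf]) (auto simp: norm_ic)
  have c2: "continuous_on UNIV (\<lambda>x::real\<times>real. F (ic 1 (snd x)))"
    by (rule continuous_on_compose2[OF cF cs]) (auto simp: norm_ic R)
  have c3: "continuous_on UNIV (\<lambda>x::real\<times>real. pk (\<phi> (ic r (fst x))) (ic 1 (snd x)))"
    using r by (intro continuous_on_pk[OF c1 cs]) (auto intro!: phi simp: norm_ic)
  have cG: "continuous_on UNIV (\<lambda>x. G (fst x) (snd x))"
    unfolding G_def using c2 c3 by (intro continuous_intros)
  have cG': "continuous_on S (\<lambda>(t, s). G t s)" for S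
    using continuous_on_subset[OF cG] by (simp add: case_prod_beta)
  have ct: "continuous_on {0..1} (\<lambda>t. integral (cbox 0 1) (G t))"
    by (rule integral_continuous_on_param[OF cG'])
  have swap: "integral (cbox 0 1) (\<lambda>t. integral (cbox 0 1) (G t)) =
      integral (cbox 0 1) (\<lambda>s. integral (cbox 0 1) (\<lambda>t. G t s))"
    by (rule integral_swap_continuous[OF cG'])
  have inner: "integral {0..1} (\<lambda>t. G t s) = (norm (F (ic 1 s)))^2 * Re (pk (\<phi> 0) (ic 1 s))" for s
  proof -
    have "((\<lambda>t. pk (\<phi> (ic r t)) (ic 1 s)) has_integral pk (\<phi> 0) (ic 1 s)) {0..1}"
      by (rule pk_mean[OF holp phi r]) (simp_all add: norm_ic)
    from has_integral_mult_left[OF has_integral_Re[OF this], of "(norm (F (ic 1 s)))^2"]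
    have "((\<lambda>t. G t s) has_integral (norm (F (ic 1 s)))^2 * Re (pk (\<phi> 0) (ic 1 s))) {0..1}"
      unfolding G_def by (simp add: mult.commute)
    then show ?thesis by (rule integral_unique)
  qed
  have "((\<lambda>t. integral {0..1} (G t)) has_integral integral {0..1} (\<lambda>t. integral {0..1} (G t))) {0..1}"
    using ct unfolding cbox_interval by (rule integrable_integral[OF integrable_continuous_interval])
  then show ?thesis using swap unfolding inner cbox_interval by (simp add: G_def[abs_def])
qed




lemma U_integrable:
  assumes hol: "F holomorphic_on ball 0 R" and R: "R > 1" and z: "norm z < 1"
  shows "(\<lambda>s. (norm (F (ic 1 s)))^2 * Re (pk z (ic 1 s))) integrable_on {0..1}"
proof -
  have cF: "continuous_on (ball 0 R) F" using hol holomorphic_on_imp_continuous_on by blast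
  have cFe: "continuous_on {0..1} (\<lambda>s. F (ic 1 s))" by (rule cont_comp_ic[OF cF]) (use R in auto)
  have cpk: "continuous_on {0..1} (\<lambda>s. pk z (ic 1 s))"
    by (rule continuous_on_pk[OF continuous_on_const continuous_on_ic]) (simp add: z norm_ic)
  have "continuous_on {0..1} (\<lambda>s. (norm (F (ic 1 s)))^2 * Re (pk z (ic 1 s)))"
    using cFe cpk by (intro continuous_intros)
  then show ?thesis by (rule integrable_continuous_interval)
qed

lemma poly_comp_bound:
  fixes \<alpha> :: "nat \<Rightarrow> complex"
  assumes holp: "\<phi> holomorphic_on ball 0 1" and phi: "\<And>z. norm z < 1 \<Longrightarrow> norm (\<phi> z) < 1"
    and r: "0 < r" "r < 1"
  shows "(\<Sum>k\<le>M. (norm ((deriv ^^ k) (\<lambda>z. \<Sum>n\<le>N. \<alpha> n * (\<phi> z)^n) 0 / fact k))^2 * r^(2*k))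
     \<le> (1 + norm (\<phi> 0)) / (1 - norm (\<phi> 0)) * (\<Sum>n\<le>N. (norm (\<alpha> n))^2)"
proof -
  define F where "F u = (\<Sum>n\<le>N. \<alpha> n * u^n)" for u
  define K where "K = (1 + norm (\<phi> 0)) / (1 - norm (\<phi> 0))"
  have holF: "F holomorphic_on ball 0 2" unfolding F_def by (intro holomorphic_intros)
  have holA: "(\<lambda>z. F (\<phi> z)) holomorphic_on ball 0 1"
    using holomorphic_on_compose_gen[OF holp holomorphic_on_subset[OF holF], of "ball 0 1"] phi
    by (auto simp: o_def image_subset_iff subset_ball)
  have ph0: "norm (\<phi> 0) < 1" using phi[of 0] by simp
  define U where "U z = integral {0..1} (\<lambda>s. (norm (F (ic 1 s)))^2 * Re (pk z (ic 1 s)))" for z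
  have s1: "(\<Sum>k\<le>M. (norm ((deriv ^^ k) (\<lambda>z. F (\<phi> z)) 0 / fact k))^2 * r^(2*k))
      \<le> integral {0..1} (\<lambda>t. (norm (F (\<phi> (ic r t))))^2)"
    using bessel_circle[OF holA r] by simp
  have mU: "((\<lambda>t. U (\<phi> (ic r t))) has_integral U (\<phi> 0)) {0..1}"
    unfolding U_def by (rule mean_U[OF holF _ holp phi r]) simp
  have cA: "continuous_on {0..1} (\<lambda>t. (norm (F (\<phi> (ic r t))))^2)"
    using holomorphic_on_imp_continuous_on[OF holA] r by (intro continuous_intros cont_comp_ic) auto
  have s2: "integral {0..1} (\<lambda>t. (norm (F (\<phi> (ic r t))))^2) \<le> integral {0..1} (\<lambda>t. U (\<phi> (ic r t)))"
  proof (rule integral_le)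
    show "(\<lambda>t. (norm (F (\<phi> (ic r t))))^2) integrable_on {0..1}" by (rule integrable_continuous_interval[OF cA])
    show "(\<lambda>t. U (\<phi> (ic r t))) integrable_on {0..1}" using mU by blast
    fix t :: real
    have n: "norm (\<phi> (ic r t)) < 1" using phi r by (simp add: norm_ic)
    show "(norm (F (\<phi> (ic r t))))^2 \<le> U (\<phi> (ic r t))"
      unfolding U_def by (rule majorant[OF holF _ n]) simp
  qed
  have s3: "integral {0..1} (\<lambda>t. U (\<phi> (ic r t))) = U (\<phi> 0)" using mU by (rule integral_unique)
  have pp: "((\<lambda>s. K * (norm (F (ic 1 s)))^2) has_integral K * (\<Sum>n\<le>N. (norm (\<alpha> n))^2)) {0..1}"
    unfolding F_def by (rule has_integral_mult_right[OF poly_parseval])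
  have s4: "U (\<phi> 0) \<le> K * (\<Sum>n\<le>N. (norm (\<alpha> n))^2)"
    unfolding U_def
  proof (rule has_integral_le[OF integrable_integral[OF U_integrable[OF holF _ ph0]] pp])
    fix s :: real
    have e: "norm (ic 1 s) = 1" by (simp add: norm_ic)
    show "(norm (F (ic 1 s)))^2 * Re (pk (\<phi> 0) (ic 1 s)) \<le> K * (norm (F (ic 1 s)))^2"
      using mult_right_mono[OF pk_bound(1)[OF ph0 e], of "(norm (F (ic 1 s)))^2"] unfolding K_def
      by (simp add: mult.commute)
  qed simp
  show ?thesis using s1 s2 s3 s4 unfolding K_def F_def by linarith
qed




lemma sq_summ_powser:
  fixes \<alpha> :: "nat \<Rightarrow> 'a::{real_normed_div_algebra}"
  assumes sq: "summable (\<lambda>n. (norm (\<alpha> n))^2)" and u: "norm u < 1"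
  shows "summable (\<lambda>n. norm (\<alpha> n * u^n))"
proof (rule summable_comparison_test[OF _ summable_add[OF summable_geometric[of "norm u"] sq]])
  show "\<exists>N. \<forall>n\<ge>N. norm (norm (\<alpha> n * u ^ n)) \<le> norm u ^ n + (norm (\<alpha> n))^2"
  proof (intro exI allI impI)
    fix n :: nat
    define a where "a = norm (\<alpha> n)"
    define p where "p = norm u ^ n"
    have a0: "a \<ge> 0" and p0: "p \<ge> 0" and p1: "p \<le> 1"
      using u by (auto simp: a_def p_def power_le_one)
    have "a \<le> 1 + a^2"
    proof (cases "a \<le> 1")
      case True then show ?thesis by (smt (verit) zero_le_power2)
    next
      case False then have "a \<le> a * a" by (simp add: mult_le_cancel_left1)
      then show ?thesis by (simp add: power2_eq_square)
    qed
    then have "a * p \<le> (1 + a^2) * p" using p0 by (rule mult_right_mono)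
    also have "\<dots> = p + a^2 * p" by (simp add: algebra_simps)
    also have "\<dots> \<le> p + a^2" using p1 by (simp add: mult_left_le)
    finally show "norm (norm (\<alpha> n * u ^ n)) \<le> norm u ^ n + (norm (\<alpha> n))^2"
      by (simp add: a_def p_def norm_mult norm_power)
  qed
qed (use u in simp)

lemma sq_conv_radius:
  fixes \<alpha> :: "nat \<Rightarrow> 'a::{banach,real_normed_div_algebra}"
  assumes sq: "summable (\<lambda>n. (norm (\<alpha> n))^2)"
  shows "conv_radius \<alpha> \<ge> 1"
proof (rule conv_radius_geI_ex')
  fix r :: real assume "0 < r" "ereal r < 1"
  then have "norm (of_real r :: 'a) < 1" by simp
  from summable_norm_cancel[OF sq_summ_powser[OF sq this]]
  show "summable (\<lambda>n. \<alpha> n * of_real r ^ n)" .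
qed

lemma tail_bound:
  fixes \<alpha> :: "nat \<Rightarrow> complex"
  assumes sq: "summable (\<lambda>n. (norm (\<alpha> n))^2)" and u: "norm u \<le> \<rho>" and \<rho>: "\<rho> < 1"
  shows "norm ((\<Sum>n. \<alpha> n * u^n) - (\<Sum>n\<le>N. \<alpha> n * u^n))
     \<le> (\<Sum>n. norm (\<alpha> n) * \<rho>^n) - (\<Sum>n<Suc N. norm (\<alpha> n) * \<rho>^n)"
proof -
  have r0: "\<rho> \<ge> 0" using u norm_ge_zero order_trans by blast
  have su: "summable (\<lambda>n. norm (\<alpha> n * u^n))" using sq_summ_powser[OF sq] u \<rho> by simp
  have sr: "summable (\<lambda>n. norm (\<alpha> n * of_real \<rho> ^n))" using sq_summ_powser[OF sq] r0 \<rho> by simp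
  then have sr': "summable (\<lambda>n. norm (\<alpha> n) * \<rho>^n)" using r0 by (simp add: norm_mult norm_power)
  have e1: "(\<Sum>n. \<alpha> n * u^n) - (\<Sum>n\<le>N. \<alpha> n * u^n) = (\<Sum>k. \<alpha> (k + Suc N) * u^(k + Suc N))"
    using suminf_split_initial_segment[OF summable_norm_cancel[OF su], of "Suc N"]
    by (simp add: lessThan_Suc_atMost)
  have e2: "(\<Sum>n. norm (\<alpha> n) * \<rho>^n) - (\<Sum>n<Suc N. norm (\<alpha> n) * \<rho>^n) = (\<Sum>k. norm (\<alpha> (k + Suc N)) * \<rho>^(k + Suc N))"
    using suminf_split_initial_segment[OF sr', of "Suc N"] by simp
  have su2: "summable (\<lambda>k. norm (\<alpha> (k + Suc N) * u^(k + Suc N)))"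
    using su by (rule summable_ignore_initial_segment)
  have sr2: "summable (\<lambda>k. norm (\<alpha> (k + Suc N)) * \<rho>^(k + Suc N))"
    using sr' by (rule summable_ignore_initial_segment)
  have "norm (\<Sum>k. \<alpha> (k + Suc N) * u^(k + Suc N)) \<le> (\<Sum>k. norm (\<alpha> (k + Suc N) * u^(k + Suc N)))"
    by (rule summable_norm[OF su2])
  also have "\<dots> \<le> (\<Sum>k. norm (\<alpha> (k + Suc N)) * \<rho>^(k + Suc N))"
  proof (rule suminf_le[OF _ su2 sr2])
    fix k show "norm (\<alpha> (k + Suc N) * u^(k + Suc N)) \<le> norm (\<alpha> (k + Suc N)) * \<rho>^(k + Suc N)"
      using u by (auto simp: norm_mult norm_power intro!: mult_left_mono power_mono simp del: power_Suc)
  qed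
  finally show ?thesis using e1 e2 by simp
qed

lemma tail_tendsto:
  fixes \<alpha> :: "nat \<Rightarrow> complex"
  assumes sq: "summable (\<lambda>n. (norm (\<alpha> n))^2)" and \<rho>: "0 \<le> \<rho>" "\<rho> < 1"
  shows "(\<lambda>N. (\<Sum>n. norm (\<alpha> n) * \<rho>^n) - (\<Sum>n<Suc N. norm (\<alpha> n) * \<rho>^n)) \<longlonglongrightarrow> 0"
proof -
  have sr: "summable (\<lambda>n. norm (\<alpha> n * of_real \<rho> ^n))" using sq_summ_powser[OF sq] \<rho> by simp
  then have sr': "summable (\<lambda>n. norm (\<alpha> n) * \<rho>^n)" using \<rho> by (simp add: norm_mult norm_power)
  have "(\<lambda>N. (\<Sum>n<Suc N. norm (\<alpha> n) * \<rho>^n)) \<longlonglongrightarrow> (\<Sum>n. norm (\<alpha> n) * \<rho>^n)"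
    using LIMSEQ_Suc[OF summable_LIMSEQ[OF sr']] .
  from tendsto_diff[OF tendsto_const this, of "\<Sum>n. norm (\<alpha> n) * \<rho>^n"] show ?thesis
    by (simp del: sum.lessThan_Suc)
qed




lemma sq_holo:
  fixes \<alpha> :: "nat \<Rightarrow> complex"
  assumes sq: "summable (\<lambda>n. (norm (\<alpha> n))^2)"
  shows "(\<lambda>u. \<Sum>n. \<alpha> n * u^n) holomorphic_on ball 0 1"
proof -
  have cr: "fps_conv_radius (Abs_fps \<alpha>) \<ge> 1" using sq_conv_radius[OF sq] by (simp add: fps_conv_radius_def)
  have sub: "ball (0::complex) 1 \<subseteq> eball 0 (fps_conv_radius (Abs_fps \<alpha>))"
  proof (intro subsetI)
    fix x :: complex assume "x \<in> ball 0 1"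
    then have e: "ereal (dist 0 x) < 1" by simp
    from less_le_trans[OF e cr]
    show "x \<in> eball 0 (fps_conv_radius (Abs_fps \<alpha>))" by simp
  qed
  have "eval_fps (Abs_fps \<alpha>) holomorphic_on ball 0 1" by (rule holomorphic_on_eval_fps[OF sub])
  moreover have "eval_fps (Abs_fps \<alpha>) = (\<lambda>u. \<Sum>n. \<alpha> n * u^n)" by (simp add: fun_eq_iff eval_fps_def)
  ultimately show ?thesis by simp
qed

lemma comp_H2:
  fixes \<alpha> :: "nat \<Rightarrow> complex" and \<phi> :: "complex \<Rightarrow> complex"
  assumes holp: "\<phi> holomorphic_on ball 0 1" and phi: "\<And>z. norm z < 1 \<Longrightarrow> norm (\<phi> z) < 1"
    and sq: "summable (\<lambda>n. (norm (\<alpha> n))^2)"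
  shows "(\<lambda>z. \<Sum>n. \<alpha> n * (\<phi> z)^n) holomorphic_on ball 0 1"
    and "summable (\<lambda>k. (norm ((deriv^^k) (\<lambda>z. \<Sum>n. \<alpha> n * (\<phi> z)^n) 0 / fact k))^2)"
    and "(\<Sum>k. (norm ((deriv^^k) (\<lambda>z. \<Sum>n. \<alpha> n * (\<phi> z)^n) 0 / fact k))^2)
          \<le> (1 + norm (\<phi> 0)) / (1 - norm (\<phi> 0)) * (\<Sum>n. (norm (\<alpha> n))^2)"
proof -
  define G where "G z = (\<Sum>n. \<alpha> n * (\<phi> z)^n)" for z
  define GN where "GN N z = (\<Sum>n\<le>N. \<alpha> n * (\<phi> z)^n)" for N z
  define K where "K = (1 + norm (\<phi> 0)) / (1 - norm (\<phi> 0))"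
  define S where "S = (\<Sum>n. (norm (\<alpha> n))^2)"
  define a where "a k = (deriv^^k) G 0 / fact k" for k
  define aN where "aN N k = (deriv^^k) (GN N) 0 / fact k" for N k
  have ph0: "norm (\<phi> 0) < 1" using phi[of 0] by simp
  have K0: "K \<ge> 0" unfolding K_def using ph0 by simp
  have holG: "G holomorphic_on ball 0 1"
    using holomorphic_on_compose_gen[OF holp sq_holo[OF sq]] phi
    by (auto simp: G_def[abs_def] o_def image_subset_iff)
  then show "(\<lambda>z. \<Sum>n. \<alpha> n * (\<phi> z)^n) holomorphic_on ball 0 1" by (simp add: G_def[abs_def])
  have holN: "GN N holomorphic_on ball 0 1" for N
    unfolding GN_def using holp by (intro holomorphic_intros)
  have cp: "continuous_on (ball 0 1) \<phi>" using holp holomorphic_on_imp_continuous_on by blast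
  have cpt: "continuous_on {0..1} (\<lambda>t. norm (\<phi> (ic (1/2) t)))"
    by (intro continuous_intros cont_comp_ic[OF cp]) auto
  obtain t0 where t0: "t0 \<in> {0..1}" "\<And>t. t \<in> {0..1} \<Longrightarrow> norm (\<phi> (ic (1/2) t)) \<le> norm (\<phi> (ic (1/2) t0))"
    using continuous_attains_sup[OF compact_Icc _ cpt] by auto
  define \<rho> where "\<rho> = norm (\<phi> (ic (1/2) t0))"
  have \<rho>1: "\<rho> < 1" unfolding \<rho>_def by (rule phi) (simp add: norm_ic)
  have \<rho>0: "\<rho> \<ge> 0" by (simp add: \<rho>_def)
  define T where "T N = (\<Sum>n. norm (\<alpha> n) * \<rho>^n) - (\<Sum>n<Suc N. norm (\<alpha> n) * \<rho>^n)" for N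
  have T0: "T \<longlonglongrightarrow> 0" unfolding T_def by (rule tail_tendsto[OF sq \<rho>0 \<rho>1])
  have conv: "(\<lambda>N. aN N k) \<longlonglongrightarrow> a k" for k
  proof -
    have i1: "((\<lambda>t. GN N (ic (1/2) t) / (ic (1/2) t)^k) has_integral aN N k) {0..1}" for N
      unfolding aN_def by (rule mean_hol[OF holN]) auto
    have i2: "((\<lambda>t. G (ic (1/2) t) / (ic (1/2) t)^k) has_integral a k) {0..1}"
      unfolding a_def by (rule mean_hol[OF holG]) auto
    have b: "norm (aN N k - a k) \<le> T N * 2^k" for N
    proof -
      have "norm (aN N k - a k) \<le> T N * 2^k * Henstock_Kurzweil_Integration.content (cbox (0::real) 1)"
      proof (rule has_integral_bound)
        show "0 \<le> T N * 2^k"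
          using tail_bound[OF sq _ \<rho>1, of 0 N] \<rho>0 unfolding T_def by simp
        show "((\<lambda>t. GN N (ic (1/2) t) / (ic (1/2) t)^k - G (ic (1/2) t) / (ic (1/2) t)^k) has_integral
            (aN N k - a k)) (cbox 0 1)"
          using has_integral_diff[OF i1 i2] by simp
        fix t :: real assume t: "t \<in> cbox 0 1"
        have u: "norm (\<phi> (ic (1/2) t)) \<le> \<rho>" using t0(2)[of t] t by (simp add: \<rho>_def)
        have "norm (GN N (ic (1/2) t) / (ic (1/2) t)^k - G (ic (1/2) t) / (ic (1/2) t)^k)
            = norm (G (ic (1/2) t) - GN N (ic (1/2) t)) * 2^k"
          by (simp add: diff_divide_distrib[symmetric] norm_divide norm_power norm_ic norm_minus_commute
               power_one_over)
        also have "\<dots> \<le> T N * 2^k"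
          using tail_bound[OF sq u \<rho>1, of N] unfolding T_def G_def GN_def by simp
        finally show "norm (GN N (ic (1/2) t) / (ic (1/2) t)^k - G (ic (1/2) t) / (ic (1/2) t)^k) \<le> T N * 2^k" .
      qed
      then show ?thesis by simp
    qed
    have "(\<lambda>N. aN N k - a k) \<longlonglongrightarrow> 0"
    proof (rule Lim_null_comparison[OF always_eventually])
      show "\<forall>N. norm (aN N k - a k) \<le> T N * 2^k" using b by blast
      show "(\<lambda>N. T N * 2^k) \<longlonglongrightarrow> 0" using tendsto_mult_left_zero[OF T0] by simp
    qed
    from tendsto_add[OF this tendsto_const[of "a k"]] show ?thesis by simp
  qed
  have pb: "(\<Sum>k\<le>M. (norm (aN N k))^2) \<le> K * S" for N M
  proof -
    define rj where "rj j = 1 - inverse (real (Suc (Suc j)))" for j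
    have rj: "0 < rj j" "rj j < 1" for j by (auto simp: rj_def field_simps)
    have rjl: "rj \<longlonglongrightarrow> 1"
      using tendsto_diff[OF tendsto_const LIMSEQ_Suc[OF LIMSEQ_inverse_real_of_nat], of 1]
      by (simp add: rj_def[abs_def])
    have lim: "(\<lambda>j. \<Sum>k\<le>M. (norm (aN N k))^2 * rj j^(2*k)) \<longlonglongrightarrow> (\<Sum>k\<le>M. (norm (aN N k))^2 * 1^(2*k))"
      by (intro tendsto_intros rjl)
    have "(\<Sum>k\<le>M. (norm (aN N k))^2 * 1^(2*k)) \<le> K * (\<Sum>n\<le>N. (norm (\<alpha> n))^2)"
    proof (rule LIMSEQ_le_const2[OF lim], intro exI allI impI)
      fix j :: nat
      show "(\<Sum>k\<le>M. (norm (aN N k))^2 * rj j^(2*k)) \<le> K * (\<Sum>n\<le>N. (norm (\<alpha> n))^2)"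
        using poly_comp_bound[OF holp phi rj, where M=M and N=N and \<alpha>=\<alpha>] unfolding aN_def GN_def K_def by simp
    qed
    also have "\<dots> \<le> K * S"
      unfolding S_def by (intro mult_left_mono K0 sum_le_suminf sq) auto
    finally show ?thesis by simp
  qed
  have ab: "(\<Sum>k\<le>M. (norm (a k))^2) \<le> K * S" for M
  proof (rule LIMSEQ_le_const2)
    show "(\<lambda>N. \<Sum>k\<le>M. (norm (aN N k))^2) \<longlonglongrightarrow> (\<Sum>k\<le>M. (norm (a k))^2)"
      by (intro tendsto_intros conv)
    show "\<exists>N0. \<forall>N\<ge>N0. (\<Sum>k\<le>M. (norm (aN N k))^2) \<le> K * S" using pb by blast
  qed
  have ab': "(\<Sum>k<n. (norm (a k))^2) \<le> K * S" for n
  proof -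
    have "(\<Sum>k<n. (norm (a k))^2) \<le> (\<Sum>k\<le>n. (norm (a k))^2)" by (rule sum_mono2) auto
    then show ?thesis using ab[of n] by linarith
  qed
  have sa: "summable (\<lambda>k. (norm (a k))^2)" by (rule summableI_nonneg_bounded[OF _ ab']) simp
  then show "summable (\<lambda>k. (norm ((deriv^^k) (\<lambda>z. \<Sum>n. \<alpha> n * (\<phi> z)^n) 0 / fact k))^2)"
    by (simp add: a_def G_def[abs_def])
  have "(\<Sum>k. (norm (a k))^2) \<le> K * S" by (rule suminf_le_const[OF sa ab'])
  then show "(\<Sum>k. (norm ((deriv^^k) (\<lambda>z. \<Sum>n. \<alpha> n * (\<phi> z)^n) 0 / fact k))^2)
          \<le> (1 + norm (\<phi> 0)) / (1 - norm (\<phi> 0)) * (\<Sum>n. (norm (\<alpha> n))^2)"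
    by (simp add: a_def G_def[abs_def] K_def S_def)
qed




lemma sums_iota: "f sums A \<Longrightarrow> (\<lambda>k. iota I (f k)) sums iota I A"
  by (rule bounded_linear.sums[OF bounded_linear_iota])

lemma bl_hmul_right: "bounded_linear (\<lambda>x. hmul x c)"
  by (rule bounded_bilinear.bounded_linear_left[OF bounded_bilinear_hmul])

lemma bl_hmul_left: "bounded_linear (hmul c)"
  by (rule bounded_bilinear.bounded_linear_right[OF bounded_bilinear_hmul])

lemma sums_Lq:
  assumes "f sums A" "g sums B"
  shows "(\<lambda>k. Lq I (f k) (g k)) sums Lq I A B"
proof -
  have "(\<lambda>k. hmul (iota I (g k)) (Jof I)) sums hmul (iota I B) (Jof I)"
    by (rule bounded_linear.sums[OF bl_hmul_right sums_iota[OF assms(2)]])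
  from sums_add[OF sums_iota[OF assms(1)] this] show ?thesis by (simp add: Lq_def)
qed

lemma hmul_iota_Lq:
  assumes "I \<in> imag_units"
  shows "hmul (iota I u) (Lq I z w) = Lq I (u * z) (u * w)"
  unfolding Lq_def by (simp add: hmul_add_right hmul_assoc[symmetric] iota_mult[OF assms])

lemma Lq_hmul_iota:
  assumes "I \<in> imag_units"
  shows "hmul (Lq I z w) (iota I p) = Lq I (z * p) (w * cnj p)"
  unfolding Lq_def
  by (simp add: hmul_add_left hmul_assoc J_iota[OF assms] iota_mult[OF assms] hmul_assoc[symmetric])

lemma Lq_zero[simp]: "Lq I 0 0 = 0" by (simp add: Lq_def)

lemma norm_iota_any: "K \<in> imag_units \<Longrightarrow> norm (iota K w) = norm w" by (rule norm_iota)

lemma extend_ball: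
  assumes I: "I \<in> imag_units"
    and Trep: "\<And>n K w. K \<in> imag_units \<Longrightarrow> norm w < 1 \<Longrightarrow>
        T n (iota K w) = RepF I K (T n (iota I w)) (T n (iota I (cnj w)))"
    and sl: "\<And>w. norm w < 1 \<Longrightarrow> (\<lambda>n. T n (iota I w)) sums SF w"
    and cr: "\<And>w. norm w < 1 \<Longrightarrow> (\<lambda>k. hmul (hpow (iota I w) k) (c k)) sums SF w"
    and q: "q \<in> qball"
  shows "summable (\<lambda>n. T n q)" "(\<lambda>k. hmul (hpow q k) (c k)) sums (\<Sum>n. T n q)"
proof -
  obtain K w where K: "K \<in> imag_units" and qw: "q = iota K w" using quat_polar[OF I] by blast
  have w: "norm w < 1" using q qw norm_iota[OF K] by (simp add: qball_def)
  have w': "norm (cnj w) < 1" using w by simp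
  have s1: "(\<lambda>n. T n q) sums RepF I K (SF w) (SF (cnj w))"
    unfolding qw Trep[OF K w] by (rule RepF_sums[OF sl[OF w] sl[OF w']])
  then show "summable (\<lambda>n. T n q)" by (rule sums_summable)
  have "(\<lambda>k. hmul (hpow q k) (c k)) sums RepF I K (SF w) (SF (cnj w))"
    unfolding qw hmul_hpow_rep[OF I K] by (rule RepF_sums[OF cr[OF w] cr[OF w']])
  with sums_unique[OF s1] show "(\<lambda>k. hmul (hpow q k) (c k)) sums (\<Sum>n. T n q)" by simp
qed




lemma Lq_diff: "Lq I z w - Lq I z' w' = Lq I (z - z') (w - w')"
  by (simp add: Lq_def iota_diff hmul_diff_left)

lemma Lq_inj:
  assumes I: "I \<in> imag_units" and e: "Lq I z w = Lq I z' w'"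
  shows "z = z'" "w = w'"
proof -
  have "(norm (z - z'))^2 + (norm (w - w'))^2 = 0"
    using norm_Lq[OF I, of "z - z'" "w - w'"] e Lq_diff[of I z w z' w'] by simp
  then show "z = z'" "w = w'" by (simp_all add: add_nonneg_eq_0_iff)
qed

lemma dec_Lq:
  assumes I: "I \<in> imag_units"
  shows "dec1 I (Lq I z w) = z" "dec2 I (Lq I z w) = w"
  using Lq_inj[OF I Lq_dec[OF I, of "Lq I z w"]] by auto

lemma iota_Lq: "iota I z = Lq I z 0" by (simp add: Lq_def)

lemma norm_dec:
  assumes I: "I \<in> imag_units"
  shows "(norm q)^2 = (norm (dec1 I q))^2 + (norm (dec2 I q))^2"
  using norm_Lq[OF I, of "dec1 I q" "dec2 I q"] Lq_dec[OF I, of q] by simp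

lemma coeff_unique_ball:
  assumes "represents F c" "represents F c'"
  shows "c = c'"
proof (rule quat_coeff_unique)
  fix x :: real assume x: "\<bar>x\<bar> < 1"
  have "x *\<^sub>R hone \<in> qball" using x by (simp add: qball_def norm_vec_def L2_set_def sum_4 hone_def abs_square_less_1)
  then show "(\<lambda>n. hmul (hpow (x *\<^sub>R hone) n) (c n)) sums F (x *\<^sub>R hone)"
    "(\<lambda>n. hmul (hpow (x *\<^sub>R hone) n) (c' n)) sums F (x *\<^sub>R hone)"
    using assms by (auto simp: represents_def)
qed

lemma powser_comm_sums:
  fixes \<alpha> :: "nat \<Rightarrow> complex"
  assumes sq: "summable (\<lambda>n. (norm (\<alpha> n))^2)" and u: "norm u < 1"
  shows "(\<lambda>n. u^n * \<alpha> n) sums (\<Sum>n. \<alpha> n * u^n)"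
proof -
  have "summable (\<lambda>n. \<alpha> n * u^n)" by (rule summable_norm_cancel[OF sq_summ_powser[OF sq u]])
  then show ?thesis by (simp add: summable_sums mult.commute)
qed

lemma op_key:
  fixes T :: "(nat \<Rightarrow> quat) \<Rightarrow> nat \<Rightarrow> quat \<Rightarrow> quat" and \<psi>a \<psi>b :: "complex \<Rightarrow> complex"
  assumes I: "I \<in> imag_units"
    and h1: "\<psi>a holomorphic_on ball 0 1" and p1: "\<And>z. norm z < 1 \<Longrightarrow> norm (\<psi>a z) < 1"
    and h2: "\<psi>b holomorphic_on ball 0 1" and p2: "\<And>z. norm z < 1 \<Longrightarrow> norm (\<psi>b z) < 1"
    and n1: "norm (\<psi>a 0) = \<rho>" and n2: "norm (\<psi>b 0) = \<rho>"
    and Tsl: "\<And>a n w. norm w < 1 \<Longrightarrow> T a n (iota I w) = Lq I ((\<psi>a w)^n * dec1 I (a n)) ((\<psi>b w)^n * dec2 I (a n))"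
    and Trep: "\<And>a n K w. K \<in> imag_units \<Longrightarrow> norm w < 1 \<Longrightarrow>
        T a n (iota K w) = RepF I K (T a n (iota I w)) (T a n (iota I (cnj w)))"
    and a: "H2 a"
  shows "\<exists>c. H2 c \<and> represents (series_fun (T) a) c \<and> (\<forall>q\<in>qball. summable (\<lambda>n. T a n q))
     \<and> (\<Sum>n. (norm (c n))^2) \<le> (1 + \<rho>) / (1 - \<rho>) * (\<Sum>n. (norm (a n))^2)
     \<and> (\<forall>w. norm w < 1 \<longrightarrow> series_fun T a (iota I w) =
           Lq I (\<Sum>n. dec1 I (a n) * (\<psi>a w)^n) (\<Sum>n. dec2 I (a n) * (\<psi>b w)^n))"
proof -
  define \<alpha> where "\<alpha> n = dec1 I (a n)" for n
  define \<alpha>' where "\<alpha>' n = dec2 I (a n)" for n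
  define K where "K = (1 + \<rho>) / (1 - \<rho>)"
  have sa: "summable (\<lambda>n. (norm (a n))^2)" using a by (simp add: H2_def)
  have nd: "(norm (a n))^2 = (norm (\<alpha> n))^2 + (norm (\<alpha>' n))^2" for n
    unfolding \<alpha>_def \<alpha>'_def by (rule norm_dec[OF I])
  have sq1: "summable (\<lambda>n. (norm (\<alpha> n))^2)"
    by (rule summable_comparison_test[OF _ sa]) (auto simp: nd)
  have sq2: "summable (\<lambda>n. (norm (\<alpha>' n))^2)"
    by (rule summable_comparison_test[OF _ sa]) (auto simp: nd)
  have Sa: "(\<Sum>n. (norm (a n))^2) = (\<Sum>n. (norm (\<alpha> n))^2) + (\<Sum>n. (norm (\<alpha>' n))^2)"
    unfolding nd by (rule suminf_add[OF sq1 sq2, symmetric])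
  define G1 where "G1 z = (\<Sum>n. \<alpha> n * (\<psi>a z)^n)" for z
  define G2 where "G2 z = (\<Sum>n. \<alpha>' n * (\<psi>b z)^n)" for z
  note C1 = comp_H2[OF h1 p1 sq1, folded G1_def[abs_def]]
  note C2 = comp_H2[OF h2 p2 sq2, folded G2_def[abs_def]]
  define \<gamma>1 where "\<gamma>1 k = (deriv^^k) G1 0 / fact k" for k
  define \<gamma>2 where "\<gamma>2 k = (deriv^^k) G2 0 / fact k" for k
  define c where "c k = Lq I (\<gamma>1 k) (\<gamma>2 k)" for k
  have sl: "(\<lambda>n. T a n (iota I w)) sums Lq I (G1 w) (G2 w)" if w: "norm w < 1" for w
  proof -
    have "(\<lambda>n. Lq I ((\<psi>a w)^n * \<alpha> n) ((\<psi>b w)^n * \<alpha>' n)) sums Lq I (G1 w) (G2 w)"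
      unfolding G1_def G2_def
      by (rule sums_Lq[OF powser_comm_sums[OF sq1 p1[OF w]] powser_comm_sums[OF sq2 p2[OF w]]])
    then show ?thesis using Tsl[OF w] by (simp add: \<alpha>_def \<alpha>'_def)
  qed
  have cr: "(\<lambda>k. hmul (hpow (iota I w) k) (c k)) sums Lq I (G1 w) (G2 w)" if w: "norm w < 1" for w
  proof -
    have wb: "w \<in> ball (0::complex) 1" using that by simp
    have e1: "(\<lambda>k. \<gamma>1 k * (w - 0)^k) sums G1 w"
      unfolding \<gamma>1_def using holomorphic_power_series[OF C1(1) wb] by simp
    have e2: "(\<lambda>k. \<gamma>2 k * (w - 0)^k) sums G2 w"
      unfolding \<gamma>2_def using holomorphic_power_series[OF C2(1) wb] by simp
    have "(\<lambda>k. Lq I (w^k * \<gamma>1 k) (w^k * \<gamma>2 k)) sums Lq I (G1 w) (G2 w)"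
      by (rule sums_Lq) (use e1 e2 in \<open>simp_all add: mult.commute\<close>)
    then show ?thesis by (simp add: c_def hpow_iota[OF I] hmul_iota_Lq[OF I])
  qed
  have ext: "summable (\<lambda>n. T a n q) \<and> (\<lambda>k. hmul (hpow q k) (c k)) sums (\<Sum>n. T a n q)" if q: "q \<in> qball" for q
    using extend_ball[where T="T a" and SF="\<lambda>w. Lq I (G1 w) (G2 w)", OF I Trep sl cr q] by blast
  have rep: "represents (series_fun T a) c"
    unfolding represents_def series_fun_def using ext by blast
  have nc: "(norm (c k))^2 = (norm (\<gamma>1 k))^2 + (norm (\<gamma>2 k))^2" for k
    unfolding c_def by (rule norm_Lq[OF I])
  have sg1: "summable (\<lambda>k. (norm (\<gamma>1 k))^2)" using C1(2) by (simp add: \<gamma>1_def)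
  have sg2: "summable (\<lambda>k. (norm (\<gamma>2 k))^2)" using C2(2) by (simp add: \<gamma>2_def)
  have H2c: "H2 c" unfolding H2_def nc by (rule summable_add[OF sg1 sg2])
  have "(\<Sum>n. (norm (c n))^2) = (\<Sum>k. (norm (\<gamma>1 k))^2) + (\<Sum>k. (norm (\<gamma>2 k))^2)"
    unfolding nc by (rule suminf_add[OF sg1 sg2, symmetric])
  also have "\<dots> \<le> K * (\<Sum>n. (norm (\<alpha> n))^2) + K * (\<Sum>n. (norm (\<alpha>' n))^2)"
    using C1(3) C2(3) n1 n2 by (simp add: \<gamma>1_def \<gamma>2_def K_def add_mono)
  also have "\<dots> = K * (\<Sum>n. (norm (a n))^2)" by (simp add: Sa distrib_left)
  finally have bnd: "(\<Sum>n. (norm (c n))^2) \<le> K * (\<Sum>n. (norm (a n))^2)" .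
  have sfw: "series_fun T a (iota I w) = Lq I (\<Sum>n. dec1 I (a n) * (\<psi>a w)^n) (\<Sum>n. dec2 I (a n) * (\<psi>b w)^n)"
    if "norm w < 1" for w
    using sums_unique[OF sl[OF that]] by (simp add: series_fun_def G1_def G2_def \<alpha>_def \<alpha>'_def)
  show ?thesis using H2c rep ext bnd sfw unfolding K_def by blast
qed




lemma op_thm:
  fixes T :: "(nat \<Rightarrow> quat) \<Rightarrow> nat \<Rightarrow> quat \<Rightarrow> quat" and \<psi>a \<psi>b :: "complex \<Rightarrow> complex"
  assumes I: "I \<in> imag_units"
    and h1: "\<psi>a holomorphic_on ball 0 1" and p1: "\<And>z. norm z < 1 \<Longrightarrow> norm (\<psi>a z) < 1"
    and h2: "\<psi>b holomorphic_on ball 0 1" and p2: "\<And>z. norm z < 1 \<Longrightarrow> norm (\<psi>b z) < 1"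
    and n1: "norm (\<psi>a 0) = \<rho>" and n2: "norm (\<psi>b 0) = \<rho>"
    and Tsl: "\<And>a n w. norm w < 1 \<Longrightarrow> T a n (iota I w) = Lq I ((\<psi>a w)^n * dec1 I (a n)) ((\<psi>b w)^n * dec2 I (a n))"
    and Trep: "\<And>a n K w. K \<in> imag_units \<Longrightarrow> norm w < 1 \<Longrightarrow>
        T a n (iota K w) = RepF I K (T a n (iota I w)) (T a n (iota I (cnj w)))"
  shows "bounded_H2_op T \<and> sqrt (1 / (1 - \<rho>^2)) \<le> opnorm T \<and> opnorm T \<le> sqrt ((1 + \<rho>) / (1 - \<rho>))"
proof -
  have key: "\<exists>c. H2 c \<and> represents (series_fun (T) a) c \<and> (\<forall>q\<in>qball. summable (\<lambda>n. T a n q))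
     \<and> (\<Sum>n. (norm (c n))^2) \<le> (1 + \<rho>) / (1 - \<rho>) * (\<Sum>n. (norm (a n))^2)
     \<and> (\<forall>w. norm w < 1 \<longrightarrow> series_fun T a (iota I w) =
           Lq I (\<Sum>n. dec1 I (a n) * (\<psi>a w)^n) (\<Sum>n. dec2 I (a n) * (\<psi>b w)^n))" if "H2 a" for a
    using I h1 p1 h2 p2 n1 n2 Tsl Trep that by (rule op_key)
  define K where "K = (1 + \<rho>) / (1 - \<rho>)"
  have \<rho>1: "\<rho> < 1" using p1[of 0] n1 by simp
  have \<rho>0: "\<rho> \<ge> 0" using n1 by auto
  have K0: "K \<ge> 0" using \<rho>1 \<rho>0 by (simp add: K_def)
  have ub: "x \<le> sqrt K" if xin: "x \<in> op_image_norms T" for x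
  proof -
    obtain a c' where x: "x = h2norm c'" and a: "H2 a" "h2norm a \<le> 1" and rc': "represents (series_fun T a) c'"
      using xin unfolding op_image_norms_def by blast
    obtain c where c: "H2 c" "represents (series_fun T a) c"
        "(\<Sum>n. (norm (c n))^2) \<le> K * (\<Sum>n. (norm (a n))^2)"
      using key[OF a(1)] unfolding K_def by blast
    have cc: "c' = c" using coeff_unique_ball[OF rc' c(2)] .
    have sa: "(\<Sum>n. (norm (a n))^2) \<le> 1"
    proof -
      have "sqrt (\<Sum>n. (norm (a n))^2) \<le> 1" using a(2) by (simp add: h2norm_def)
      then show ?thesis by simp
    qed
    have "(\<Sum>n. (norm (c n))^2) \<le> K" using c(3) mult_left_mono[OF sa K0] by simp
    then show ?thesis unfolding x cc h2norm_def by simp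
  qed
  have H2_0: "H2 (\<lambda>_. 0)" by (simp add: H2_def)
  obtain c0 where c0: "H2 c0" "represents (series_fun T (\<lambda>_. 0)) c0"
    using key[OF H2_0] by blast
  have ne: "h2norm c0 \<in> op_image_norms T"
  proof -
    have "h2norm (\<lambda>_::nat. 0::quat) \<le> 1" by (simp add: h2norm_def)
    then show ?thesis unfolding op_image_norms_def using H2_0 c0(2) by blast
  qed
  have bdd: "bdd_above (op_image_norms T)" using ub by (auto simp: bdd_above_def)
  have bounded: "bounded_H2_op T"
    unfolding bounded_H2_op_def
  proof (rule conjI[OF allI[OF impI] bdd])
    fix a assume "H2 a"
    from key[OF this] show "(\<forall>q\<in>qball. summable (\<lambda>n. T a n q)) \<and> (\<exists>c. H2 c \<and> represents (series_fun T a) c)"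
      by blast
  qed
  have upper: "opnorm T \<le> sqrt K"
    unfolding opnorm_def by (rule cSup_least) (use ne ub in auto)
  define w where "w = \<psi>a 0"
  define s where "s = sqrt (1 - \<rho>^2)"
  have r2: "\<rho>^2 < 1" using \<rho>0 \<rho>1 by (simp add: abs_square_less_1)
  have s0: "s > 0" using r2 by (simp add: s_def)
  define a where "a n = iota I (of_real s * cnj w ^ n)" for n
  have na: "(norm (a n))^2 = s^2 * (\<rho>^2)^n" for n
    by (simp add: a_def norm_iota[OF I] norm_mult norm_power w_def n1 power_mult_distrib power_mult[symmetric] mult.commute)
  have geo: "(\<lambda>n. s^2 * (\<rho>^2)^n) sums (s^2 * (1 / (1 - \<rho>^2)))"
    using sums_mult[OF geometric_sums[of "\<rho>^2"], of "s^2"] r2 \<rho>0 by simp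
  have s2: "s^2 = 1 - \<rho>^2" using r2 by (simp add: s_def)
  have geo': "(\<lambda>n. (norm (a n))^2) sums 1" using geo s2 r2 unfolding na by simp
  have Ha: "H2 a" using geo' by (auto simp: H2_def sums_summable)
  have ha: "h2norm a = 1" using geo' by (simp add: h2norm_def sums_unique[symmetric])
  obtain c where c: "H2 c" "represents (series_fun T a) c"
     "\<forall>w. norm w < 1 \<longrightarrow> series_fun T a (iota I w) =
           Lq I (\<Sum>n. dec1 I (a n) * (\<psi>a w)^n) (\<Sum>n. dec2 I (a n) * (\<psi>b w)^n)"
    using key[OF Ha] by blast
  have mem: "h2norm c \<in> op_image_norms T"
    unfolding op_image_norms_def using Ha ha c(2) by (intro CollectI exI[of _ a] exI[of _ c]) simp
  have d1: "dec1 I (a n) = of_real s * cnj w ^ n" for n by (simp add: a_def iota_Lq dec_Lq[OF I])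
  have d2: "dec2 I (a n) = 0" for n by (simp add: a_def iota_Lq dec_Lq[OF I])
  have "(\<lambda>n. of_real s * (cnj w * w)^n) sums (of_real s * (1 / (1 - cnj w * w)))"
  proof (rule sums_mult[OF geometric_sums])
    show "norm (cnj w * w) < 1" using r2 by (simp add: norm_mult w_def n1 power2_eq_square)
  qed
  moreover have "cnj w * w = of_real (\<rho>^2)" using n1 unfolding w_def
    by (metis complex_norm_square mult.commute)
  ultimately have "(\<lambda>n. dec1 I (a n) * (\<psi>a 0)^n) sums (of_real (s / (1 - \<rho>^2)))"
    by (simp add: d1 w_def power_mult_distrib mult.assoc mult.left_commute)
  then have e1: "(\<Sum>n. dec1 I (a n) * (\<psi>a 0)^n) = of_real (s / (1 - \<rho>^2))" by (rule sums_unique[symmetric])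
  have "series_fun T a (iota I 0) = Lq I (\<Sum>n. dec1 I (a n) * (\<psi>a 0)^n) (\<Sum>n. dec2 I (a n) * (\<psi>b 0)^n)"
    using c(3) by (metis norm_zero zero_less_one)
  also have "\<dots> = iota I (of_real (s / (1 - \<rho>^2)))" unfolding e1 d2 by (simp add: iota_Lq)
  finally have sf0: "series_fun T a (iota I 0) = iota I (of_real (s / (1 - \<rho>^2)))" .
  have "(\<lambda>k. hmul (hpow 0 k) (c k)) sums series_fun T a 0"
    using c(2) by (simp add: represents_def qball_def)
  moreover have "(\<lambda>k. hmul (hpow 0 k) (c k)) sums c 0"
  proof -
    have "(\<lambda>k. hmul (hpow 0 k) (c k)) = (\<lambda>k. if k = 0 then c 0 else 0)"
      by (auto simp: fun_eq_iff hpow_zero)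
    then show ?thesis using sums_single[of 0 "\<lambda>_. c 0"] by simp
  qed
  ultimately have c00: "c 0 = series_fun T a 0" using sums_unique2 by blast
  have nc0: "norm (c 0) = s / (1 - \<rho>^2)"
    using sf0 c00 s0 r2 by (simp add: norm_iota[OF I] del: of_real_divide of_real_diff of_real_power)
  have "(norm (c 0))^2 \<le> (\<Sum>n. (norm (c n))^2)"
    using sum_le_suminf[of "\<lambda>n. (norm (c n))^2" "{0}"] c(1) by (simp add: H2_def)
  then have "norm (c 0) \<le> h2norm c" unfolding h2norm_def by (simp add: real_le_rsqrt)
  moreover have "sqrt (1 / (1 - \<rho>^2)) = s / (1 - \<rho>^2)"
    using s2 s0 r2 by (simp add: s_def real_sqrt_divide field_simps)
  ultimately have "sqrt (1 / (1 - \<rho>^2)) \<le> h2norm c" using nc0 by simp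
  also have "h2norm c \<le> opnorm T" unfolding opnorm_def by (rule cSup_upper[OF mem bdd])
  finally have lower: "sqrt (1 / (1 - \<rho>^2)) \<le> opnorm T" .
  show ?thesis using bounded lower upper unfolding K_def by blast
qed




lemma powser_holo:
  fixes c :: "nat \<Rightarrow> complex"
  assumes sm: "\<And>z. norm z < 1 \<Longrightarrow> summable (\<lambda>n. c n * z^n)"
  shows "fps_conv_radius (Abs_fps c) \<ge> 1" "(\<lambda>u. \<Sum>n. c n * u^n) holomorphic_on ball 0 1"
proof -
  have "conv_radius c \<ge> 1"
  proof (rule conv_radius_geI_ex')
    fix r :: real assume "0 < r" "ereal r < 1"
    then show "summable (\<lambda>n. c n * of_real r ^ n)" by (intro sm) simp
  qed
  then show cr: "fps_conv_radius (Abs_fps c) \<ge> 1" by (simp add: fps_conv_radius_def)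
  have sub: "ball (0::complex) 1 \<subseteq> eball 0 (fps_conv_radius (Abs_fps c))"
  proof (intro subsetI)
    fix x :: complex assume "x \<in> ball 0 1"
    then have e: "ereal (dist 0 x) < 1" by simp
    from less_le_trans[OF e cr]
    show "x \<in> eball 0 (fps_conv_radius (Abs_fps c))" by simp
  qed
  have "eval_fps (Abs_fps c) holomorphic_on ball 0 1" by (rule holomorphic_on_eval_fps[OF sub])
  moreover have "eval_fps (Abs_fps c) = (\<lambda>u. \<Sum>n. c n * u^n)" by (simp add: fun_eq_iff eval_fps_def)
  ultimately show "(\<lambda>u. \<Sum>n. c n * u^n) holomorphic_on ball 0 1" by simp
qed

lemma iota_sum: "iota I (sum f A) = (\<Sum>x\<in>A. iota I (f x))"
  by (induct A rule: infinite_finite_induct) (simp_all add: iota_add)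

lemma bounded_linear_dec1: "bounded_linear (dec1 I)"
proof -
  have "linear (dec1 I)"
    by (rule linearI) (simp_all add: dec1_def complex_eq_iff inner_add_left)
  then show ?thesis by (simp add: linear_conv_bounded_linear)
qed

lemma dec1_iota: "I \<in> imag_units \<Longrightarrow> dec1 I (iota I z) = z"
  by (simp add: iota_Lq dec_Lq)

lemma spow_iota:
  assumes I: "I \<in> imag_units" and b: "\<And>j. b j = iota I (\<beta> j)"
  shows "spow b n k = iota I (fps_nth (Abs_fps \<beta> ^ n) k)"
proof (induction n arbitrary: k)
  case 0
  then show ?case by (simp add: iota_one)
next
  case (Suc n)
  have "spow b (Suc n) k = (\<Sum>j\<le>k. hmul (b j) (spow b n (k - j)))" by (simp add: sprod_def)
  also have "\<dots> = (\<Sum>j\<le>k. iota I (\<beta> j * fps_nth (Abs_fps \<beta> ^ n) (k - j)))"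
    by (simp add: Suc b iota_mult[OF I])
  also have "\<dots> = iota I (fps_nth (Abs_fps \<beta> ^ Suc n) k)"
    by (simp add: iota_sum fps_mult_nth atLeast0AtMost)
  finally show ?case .
qed

lemma fps_cnj_power:
  "fps_nth (Abs_fps (\<lambda>j. cnj (\<beta> j)) ^ n) k = cnj (fps_nth (Abs_fps \<beta> ^ n) k)"
proof (induction n arbitrary: k)
  case (Suc n)
  then show ?case by (simp add: fps_mult_nth)
qed simp

lemma pseval_iota:
  assumes I: "I \<in> imag_units" and sm: "summable (\<lambda>k. p k * z^k)"
  shows "(\<lambda>k. hmul (hpow (iota I z) k) (iota I (p k))) sums iota I (\<Sum>k. p k * z^k)"
proof -
  have "(\<lambda>k. iota I (p k * z^k)) sums iota I (\<Sum>k. p k * z^k)" by (rule sums_iota[OF summable_sums[OF sm]])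
  then show ?thesis by (simp add: hpow_iota[OF I] iota_mult[OF I] mult.commute)
qed

lemma pseval_rep:
  assumes I: "I \<in> imag_units" and K: "K \<in> imag_units"
    and s1: "summable (\<lambda>k. hmul (hpow (iota I w) k) (c k))"
    and s2: "summable (\<lambda>k. hmul (hpow (iota I (cnj w)) k) (c k))"
  shows "pseval c (iota K w) = RepF I K (pseval c (iota I w)) (pseval c (iota I (cnj w)))"
proof -
  have "(\<lambda>k. hmul (hpow (iota K w) k) (c k)) sums RepF I K (pseval c (iota I w)) (pseval c (iota I (cnj w)))"
    unfolding hmul_hpow_rep[OF I K] pseval_def by (rule RepF_sums[OF summable_sums[OF s1] summable_sums[OF s2]])
  then show ?thesis by (simp add: pseval_def sums_unique[symmetric])
qed




theorem corollary7p2: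
  fixes b :: "nat \<Rightarrow> quat"
  assumes reg: "slice_regular_ball b"
    and self_map: "\<forall>q\<in>qball. pseval b q \<in> qball"
    and slice_pres: "\<exists>I\<in>imag_units. \<forall>q\<in>qball \<inter> slice I. pseval b q \<in> qball \<inter> slice I"
  shows "bounded_H2_op (Cterm b) \<and> bounded_H2_op (Dterm b)
    \<and> sqrt (1 / (1 - (norm (pseval b 0))^2)) \<le> opnorm (Cterm b)
    \<and> opnorm (Cterm b) \<le> sqrt ((1 + norm (pseval b 0)) / (1 - norm (pseval b 0)))
    \<and> sqrt (1 / (1 - (norm (pseval b 0))^2)) \<le> opnorm (Dterm b)
    \<and> opnorm (Dterm b) \<le> sqrt ((1 + norm (pseval b 0)) / (1 - norm (pseval b 0)))"
proof -
  obtain I where I: "I \<in> imag_units" and sp: "\<And>q. q \<in> qball \<inter> slice I \<Longrightarrow> pseval b q \<in> qball \<inter> slice I"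
    using slice_pres by blast
  define \<beta> where "\<beta> j = dec1 I (b j)" for j
  define pC where "pC q = q - iota I (dec1 I q)" for q
  have blpC: "bounded_linear pC"
    unfolding pC_def[abs_def]
    by (intro bounded_linear_sub bounded_linear_ident bounded_linear_compose[OF bounded_linear_iota bounded_linear_dec1])
  have pC_slice: "pC q = 0" if qs: "q \<in> slice I" for q
  proof -
    obtain r s where q: "q = r *\<^sub>R hone + s *\<^sub>R I" using qs by (auto simp: slice_def)
    then have "q = iota I (Complex r s)" by (simp add: iota_def)
    then show ?thesis by (simp add: pC_def dec1_iota[OF I])
  qed
  have real_in: "x *\<^sub>R hone \<in> qball \<inter> slice I" if "\<bar>x\<bar> < 1" for x
  proof -
    have "x *\<^sub>R hone = iota I (of_real x)" by (simp add: iota_of_real)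
    then have "x *\<^sub>R hone \<in> qball" using that norm_iota[OF I, of "of_real x"] by (simp add: qball_def)
    moreover have "x *\<^sub>R hone \<in> slice I" unfolding slice_def
      by (rule CollectI, rule exI[of _ x], rule exI[of _ 0]) simp
    ultimately show ?thesis by blast
  qed
  have pCb: "pC \<circ> b = (\<lambda>_. 0)"
  proof (rule quat_coeff_unique[where F = "\<lambda>_. 0"])
    fix x :: real assume x: "\<bar>x\<bar> < 1"
    have sm: "summable (\<lambda>n. hmul (hpow (x *\<^sub>R hone) n) (b n))"
      using reg real_in[OF x] by (auto simp: slice_regular_ball_def)
    have "(\<lambda>n. pC (hmul (hpow (x *\<^sub>R hone) n) (b n))) sums pC (pseval b (x *\<^sub>R hone))"
      unfolding pseval_def by (rule bounded_linear.sums[OF blpC summable_sums[OF sm]])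
    moreover have "pC (pseval b (x *\<^sub>R hone)) = 0" using sp[OF real_in[OF x]] pC_slice by blast
    moreover have "pC (hmul (hpow (x *\<^sub>R hone) n) (b n)) = hmul (hpow (x *\<^sub>R hone) n) ((pC \<circ> b) n)" for n
      by (simp add: hpow_real hmul_scaleR_left linear_simps(5)[OF blpC])
    ultimately show "(\<lambda>n. hmul (hpow (x *\<^sub>R hone) n) ((pC \<circ> b) n)) sums 0" by simp
    show "(\<lambda>n. hmul (hpow (x *\<^sub>R hone) n) ((\<lambda>_. 0) n)) sums 0" by simp
  qed
  have bI: "b j = iota I (\<beta> j)" for j
    using fun_cong[OF pCb, of j] by (simp add: pC_def \<beta>_def)
  define \<phi> where "\<phi> z = (\<Sum>n. \<beta> n * z^n)" for z
  have smphi: "summable (\<lambda>n. \<beta> n * z^n)" if z: "norm z < 1" for z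
  proof -
    have "iota I z \<in> qball" using z norm_iota[OF I] by (simp add: qball_def)
    then have "summable (\<lambda>n. hmul (hpow (iota I z) n) (b n))" using reg by (simp add: slice_regular_ball_def)
    then have "summable (\<lambda>n. iota I (z^n * \<beta> n))" by (simp add: bI hpow_iota[OF I] iota_mult[OF I])
    from bounded_linear.summable[OF bounded_linear_dec1[of I] this]
    show ?thesis by (simp add: dec1_iota[OF I] mult.commute)
  qed
  have psb: "pseval b (iota I z) = iota I (\<phi> z)" if z: "norm z < 1" for z
    using pseval_iota[OF I smphi[OF z]] by (simp add: pseval_def bI[abs_def] \<phi>_def sums_unique[symmetric])
  have pphi: "norm (\<phi> z) < 1" if z: "norm z < 1" for z
  proof -
    have "iota I z \<in> qball" using z norm_iota[OF I] by (simp add: qball_def)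
    then have "pseval b (iota I z) \<in> qball" using self_map by blast
    then show ?thesis using psb[OF z] norm_iota[OF I] by (simp add: qball_def)
  qed
  note PH = powser_holo[of \<beta>, OF smphi]
  have hphi: "\<phi> holomorphic_on ball 0 1" using PH(2) by (simp add: \<phi>_def[abs_def])
  define \<phi>' where "\<phi>' z = (\<Sum>n. cnj (\<beta> n) * z^n)" for z
  have sums': "(\<lambda>n. cnj (\<beta> n) * z^n) sums cnj (\<phi> (cnj z))" if z: "norm z < 1" for z
  proof -
    have "(\<lambda>n. \<beta> n * cnj z^n) sums \<phi> (cnj z)" unfolding \<phi>_def by (rule summable_sums[OF smphi]) (use z in simp)
    then show ?thesis by (subst sums_cnj[symmetric]) simp
  qed
  have smphi': "summable (\<lambda>n. cnj (\<beta> n) * z^n)" if "norm z < 1" for z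
    using sums'[OF that] by (rule sums_summable)
  have phi'_eq: "\<phi>' z = cnj (\<phi> (cnj z))" if "norm z < 1" for z
    using sums'[OF that] by (simp add: \<phi>'_def sums_unique[symmetric])
  have pphi': "norm (\<phi>' z) < 1" if "norm z < 1" for z
    using phi'_eq[OF that] pphi[of "cnj z"] that by simp
  note PH' = powser_holo[of "\<lambda>n. cnj (\<beta> n)", OF smphi']
  have hphi': "\<phi>' holomorphic_on ball 0 1" using PH'(2) by (simp add: \<phi>'_def[abs_def])
  have n0: "norm (\<phi>' 0) = norm (\<phi> 0)" using phi'_eq[of 0] by simp
  have nb0: "norm (pseval b 0) = norm (\<phi> 0)" using psb[of 0] norm_iota[OF I] by simp
  define pn where "pn n k = fps_nth (Abs_fps \<beta> ^ n) k" for n k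
  have spow: "spow b n k = iota I (pn n k)" for n k
    unfolding pn_def by (rule spow_iota[OF I bI])
  have crn: "norm z < fps_conv_radius (Abs_fps \<beta> ^ n)" if "norm z < 1" for z n
  proof -
    have "ereal (norm z) < 1" using that by simp
    also have "1 \<le> fps_conv_radius (Abs_fps \<beta>)" by (rule PH(1))
    also have "\<dots> \<le> fps_conv_radius (Abs_fps \<beta> ^ n)" by (rule fps_conv_radius_power)
    finally show ?thesis .
  qed
  have crn': "norm z < fps_conv_radius (Abs_fps (\<lambda>j. cnj (\<beta> j)) ^ n)" if "norm z < 1" for z n
  proof -
    have "ereal (norm z) < 1" using that by simp
    also have "1 \<le> fps_conv_radius (Abs_fps (\<lambda>j. cnj (\<beta> j)))" by (rule PH'(1))
    also have "\<dots> \<le> fps_conv_radius (Abs_fps (\<lambda>j. cnj (\<beta> j)) ^ n)" by (rule fps_conv_radius_power)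
    finally show ?thesis .
  qed
  have ev: "(\<lambda>k. pn n k * z^k) sums (\<phi> z)^n" if z: "norm z < 1" for z n
  proof -
    have "(\<lambda>k. pn n k * z^k) sums eval_fps (Abs_fps \<beta> ^ n) z"
      unfolding pn_def eval_fps_def by (rule summable_sums[OF summable_fps[OF crn[OF z]]])
    moreover have "eval_fps (Abs_fps \<beta> ^ n) z = (\<phi> z)^n"
      using eval_fps_power[of z "Abs_fps \<beta>" n] crn[OF z, of 1] by (simp add: eval_fps_def \<phi>_def)
    ultimately show ?thesis by simp
  qed
  have ev': "(\<lambda>k. cnj (pn n k) * z^k) sums (\<phi>' z)^n" if z: "norm z < 1" for z n
  proof -
    have "(\<lambda>k. fps_nth (Abs_fps (\<lambda>j. cnj (\<beta> j)) ^ n) k * z^k) sums eval_fps (Abs_fps (\<lambda>j. cnj (\<beta> j)) ^ n) z"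
      unfolding eval_fps_def by (rule summable_sums[OF summable_fps[OF crn'[OF z]]])
    moreover have "eval_fps (Abs_fps (\<lambda>j. cnj (\<beta> j)) ^ n) z = (\<phi>' z)^n"
      using eval_fps_power[of z "Abs_fps (\<lambda>j. cnj (\<beta> j))" n] crn'[OF z, of 1] by (simp add: eval_fps_def \<phi>'_def)
    ultimately show ?thesis by (simp add: fps_cnj_power pn_def)
  qed
  have psS: "(\<lambda>k. hmul (hpow (iota I w) k) (spow b n k)) sums iota I ((\<phi> w)^n)" if w: "norm w < 1" for w n
    using pseval_iota[OF I sums_summable[OF ev[OF w]]] sums_unique[OF ev[OF w]] by (simp add: spow)
  have dsS: "(\<lambda>k. hmul (hpow (iota I w) k) (hmul (a n) (spow b n k))) sums
      Lq I (dec1 I (a n) * (\<phi> w)^n) (dec2 I (a n) * (\<phi>' w)^n)" if w: "norm w < 1" for w n a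
  proof -
    have e: "hmul (hpow (iota I w) k) (hmul (a n) (spow b n k)) =
        Lq I (w^k * (dec1 I (a n) * pn n k)) (w^k * (dec2 I (a n) * cnj (pn n k)))" for k
    proof -
      have "hmul (a n) (spow b n k) = Lq I (dec1 I (a n) * pn n k) (dec2 I (a n) * cnj (pn n k))"
        using Lq_hmul_iota[OF I, of "dec1 I (a n)" "dec2 I (a n)" "pn n k"] Lq_dec[OF I, of "a n"]
        by (simp add: spow)
      then show ?thesis by (simp add: hpow_iota[OF I] hmul_iota_Lq[OF I])
    qed
    have s1: "(\<lambda>k. w^k * (dec1 I (a n) * pn n k)) sums (dec1 I (a n) * (\<phi> w)^n)"
      using sums_mult[OF ev[OF w, of n], of "dec1 I (a n)"] by (simp add: algebra_simps)
    have s2: "(\<lambda>k. w^k * (dec2 I (a n) * cnj (pn n k))) sums (dec2 I (a n) * (\<phi>' w)^n)"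
      using sums_mult[OF ev'[OF w, of n], of "dec2 I (a n)"] by (simp add: algebra_simps)
    show ?thesis unfolding e by (rule sums_Lq[OF s1 s2])
  qed
  have CTsl: "Cterm b a n (iota I w) = Lq I ((\<phi> w)^n * dec1 I (a n)) ((\<phi> w)^n * dec2 I (a n))"
    if w: "norm w < 1" for a n w
  proof -
    have "pseval (spow b n) (iota I w) = iota I ((\<phi> w)^n)"
      using psS[OF w, of n] by (simp add: pseval_def sums_unique[symmetric])
    then show ?thesis
      using hmul_iota_Lq[OF I, of "(\<phi> w)^n" "dec1 I (a n)" "dec2 I (a n)"] Lq_dec[OF I, of "a n"]
      by (simp add: Cterm_def)
  qed
  have DTsl: "Dterm b a n (iota I w) = Lq I ((\<phi> w)^n * dec1 I (a n)) ((\<phi>' w)^n * dec2 I (a n))"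
    if w: "norm w < 1" for a n w
    using dsS[OF w, of a n] by (simp add: Dterm_def pseval_def sums_unique[symmetric] mult.commute)
  have CTrep: "Cterm b a n (iota K w) = RepF I K (Cterm b a n (iota I w)) (Cterm b a n (iota I (cnj w)))"
    if K: "K \<in> imag_units" and w: "norm w < 1" for a n K w
  proof -
    have w': "norm (cnj w) < 1" using w by simp
    have "pseval (spow b n) (iota K w) = RepF I K (pseval (spow b n) (iota I w)) (pseval (spow b n) (iota I (cnj w)))"
      by (rule pseval_rep[OF I K sums_summable[OF psS[OF w]] sums_summable[OF psS[OF w']]])
    then show ?thesis by (simp add: Cterm_def RepF_hmul_right)
  qed
  have DTrep: "Dterm b a n (iota K w) = RepF I K (Dterm b a n (iota I w)) (Dterm b a n (iota I (cnj w)))"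
    if K: "K \<in> imag_units" and w: "norm w < 1" for a n K w
  proof -
    have w': "norm (cnj w) < 1" using w by simp
    show ?thesis unfolding Dterm_def
      by (rule pseval_rep[OF I K sums_summable[OF dsS[OF w]] sums_summable[OF dsS[OF w']]])
  qed
  have RC: "bounded_H2_op (Cterm b) \<and> sqrt (1 / (1 - (norm (\<phi> 0))^2)) \<le> opnorm (Cterm b)
      \<and> opnorm (Cterm b) \<le> sqrt ((1 + norm (\<phi> 0)) / (1 - norm (\<phi> 0)))"
    using I hphi pphi hphi pphi refl refl CTsl CTrep by (rule op_thm)
  have RD: "bounded_H2_op (Dterm b) \<and> sqrt (1 / (1 - (norm (\<phi> 0))^2)) \<le> opnorm (Dterm b)
      \<and> opnorm (Dterm b) \<le> sqrt ((1 + norm (\<phi> 0)) / (1 - norm (\<phi> 0)))"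
    using I hphi pphi hphi' pphi' refl n0 DTsl DTrep by (rule op_thm)
  show ?thesis using RC RD unfolding nb0 by blast
qed


end
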